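(* Let $A\in\mathbb{R}^{n\times n}$, $B\in\mathbb{R}^{n\times m}$ with $(A,B)$ controllable, $Q\in\mathbb{R}^{n\times n}$ symmetric positive definite, $R\in\mathbb{R}^{m\times m}$ symmetric positive definite, and let $P^*$ be the unique symmetric positive definite solution of $A^TP+PA-PBR^{-1}B^TP+Q=0$. Consider the robust policy iteration: start from a gain $\hat K_1\in\mathbb{R}^{m\times n}$ with $A-B\hat K_1$ Hurwitz and a sequence $(\Delta G_i)_{i\ge1}$ of symmetric $(n+m)\times(n+m)$ matrices; for $i=1,2,\dots$, as long as $A-B\hat K_i$ is Hurwitz, let $\tilde P_i$ be the unique symmetric solution of $$(A-B\hat K_i)^T\tilde P_i+\tilde P_i(A-B\hat K_i)+Q+\hat K_i^TR\hat K_i=0,$$ let $$\tilde G_i=\begin{bmatrix} Q+A^T\tilde P_i+\tilde P_iA & \tilde P_iB\\ B^T\tilde P_i & R\end{bmatrix},\qquad \hat G_i=\tilde G_i+\Delta G_i,$$ and, when the lower-right $m\times m$ block $\hat G_{i,22}$ is invertible, set $\hat K_{i+1}=\hat G_{i,22}^{-1}\hat G_{i,21}$, where $\hat G_{i,21}$ is the lower-left $m\times n$ block of $\hat G_i$. Let $\|\Delta G\|_\infty=\sup_{i\ge1}\|\Delta G_i\|_F$. Then for every stabilizing $\hat K_1$ and every $\epsilon>0$ there exist $\delta_2>0$ (depending on $\epsilon$ and $\hat K_1$) and $M_0>0$ such that, whenever $\|\Delta G\|_\infty<\delta_2$: for all integers $i\ge1$, $\hat G_{i,22}$ is invertible, $A-B\hat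 K_i$ is Hurwitz, and $\|\tilde P_i\|_F<M_0$; and $$\limsup_{i\to\infty}\|\tilde P_i-P^*\|_F<\epsilon.$$ If in addition $\lim_{i\to\infty}\|\Delta G_i\|_F=0$, then $\lim_{i\to\infty}\|\tilde P_i-P^*\|_F=0$.
   Context: $\|\cdot\|_F$ is the Frobenius norm; a square matrix is Hurwitz if all its eigenvalues have negative real part. $\tilde P_i$ is the cost matrix of the policy $u=-\hat K_ix$ for the LQR cost $\int_0^\infty x^TQx+u^TRu\,dt$ with dynamics $\dot x=Ax+Bu$, and $\Delta G_i$ is the error in the policy evaluation step of Kleinman's policy iteration. *)

theory Defs
  imports "HOL-Analysis.Analysis"
begin

text \<open>Matrices are HOL-Analysis matrices indexed by finite types: n = CARD('n), m = CARD('m).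
  (n+m)x(n+m) matrices are indexed by the sum type 'n + 'm (first the n-block, then the m-block).\<close>

definition frob :: "real^'c^'r \<Rightarrow> real" where
  "frob M = sqrt (\<Sum>i\<in>UNIV. \<Sum>j\<in>UNIV. (M $ i $ j)\<^sup>2)"

definition mpow :: "real^'n^'n \<Rightarrow> nat \<Rightarrow> real^'n^'n" where
  "mpow A k = ((\<lambda>M. A ** M) ^^ k) (mat 1)"

text \<open>Kalman rank condition: rank [B, AB, ..., A^(n-1) B] = n.\<close>
definition controllable :: "real^'n^'n \<Rightarrow> real^'m^'n \<Rightarrow> bool" where
  "controllable A B \<longleftrightarrow>
     span (\<Union>k<CARD('n). range (\<lambda>u. mpow A k *v (B *v u))) = UNIV"

definition cmat :: "real^'c^'r \<Rightarrow> complex^'c^'r" where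
  "cmat M = (\<chi> i j. complex_of_real (M $ i $ j))"

definition eigenvalue :: "real^'n^'n \<Rightarrow> complex \<Rightarrow> bool" where
  "eigenvalue M c \<longleftrightarrow> (\<exists>v::complex^'n. v \<noteq> 0 \<and> cmat M *v v = c *s v)"

definition hurwitz :: "real^'n^'n \<Rightarrow> bool" where
  "hurwitz M \<longleftrightarrow> (\<forall>c. eigenvalue M c \<longrightarrow> Re c < 0)"

definition symmetric_mat :: "real^'n^'n \<Rightarrow> bool" where
  "symmetric_mat M \<longleftrightarrow> transpose M = M"

definition pos_def :: "real^'n^'n \<Rightarrow> bool" where
  "pos_def M \<longleftrightarrow> symmetric_mat M \<and> (\<forall>x. x \<noteq> 0 \<longrightarrow> x \<bullet> (M *v x) > 0)"

definition Gtil :: "real^'n^'n \<Rightarrow> real^'m^'n \<Rightarrow> real^'n^'n \<Rightarrow> real^'m^'m \<Rightarrow> real^'n^'n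
    \<Rightarrow> real^('n::finite + 'm::finite)^('n + 'm)" where
  "Gtil A B Q R P = (\<chi> i j. case (i, j) of
      (Inl a, Inl b) \<Rightarrow> (Q + transpose A ** P + P ** A) $ a $ b
    | (Inl a, Inr b) \<Rightarrow> (P ** B) $ a $ b
    | (Inr a, Inl b) \<Rightarrow> (transpose B ** P) $ a $ b
    | (Inr a, Inr b) \<Rightarrow> R $ a $ b)"

definition blk22 :: "real^('n::finite + 'm::finite)^('n + 'm) \<Rightarrow> real^'m^'m" where
  "blk22 G = (\<chi> a b. G $ Inr a $ Inr b)"

definition blk21 :: "real^('n::finite + 'm::finite)^('n + 'm) \<Rightarrow> real^'n^'m" where
  "blk21 G = (\<chi> a b. G $ Inr a $ Inl b)"

end

theory Submission
  imports Defs "Jordan_Normal_Form.Spectral_Radius"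
begin

no_notation Matrix.vec_index (infixl "$" 100)
no_notation Matrix.scalar_prod (infix "\<bullet>" 70)

abbreviation idm :: "'a::zero_neq_one^'n^'n" where "idm \<equiv> Finite_Cartesian_Product.mat 1"

fun mp :: "real^'n^'n \<Rightarrow> nat \<Rightarrow> real^'n^'n" where
  "mp S 0 = idm"
| "mp S (Suc k) = mp S k ** S"

definition CM :: "(nat \<Rightarrow> 'n::finite) \<Rightarrow> real^'n^'n \<Rightarrow> complex Matrix.mat" where
  "CM h S = Matrix.mat CARD('n) CARD('n) (\<lambda>(i,j). complex_of_real (S $ h i $ h j))"

lemma CM_dim[simp]: "dim_row (CM h (S::real^'n^'n)) = CARD('n)" "dim_col (CM h S) = CARD('n)"
  unfolding CM_def by simp_all

lemma smult_mat_vec: "dim_vec v = dim_col A \<Longrightarrow> (k \<cdot>\<^sub>m A) *\<^sub>v v = k \<cdot>\<^sub>v (A *\<^sub>v (v::'a::comm_ring_1 vec))"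
  by (rule eq_vecI) (auto simp: Matrix.scalar_prod_def row_def sum_distrib_left mult.assoc intro!: sum.cong)

lemma CM_carrier: "CM h (S::real^'n^'n) \<in> carrier_mat CARD('n) CARD('n)"
  unfolding CM_def by simp

lemma CM_mult:
  assumes h: "bij_betw h {0..<CARD('n)} (UNIV::'n::finite set)"
  shows "CM h (S ** T) = CM h S * CM h (T::real^'n^'n)"
proof (rule eq_matI)
  fix i j assume i: "i < dim_row (CM h S * CM h T)" and j: "j < dim_col (CM h S * CM h T)"
  hence i': "i < CARD('n)" and j': "j < CARD('n)" by (auto simp: CM_def)
  have "(CM h S * CM h T) $$ (i,j) = (\<Sum>k\<in>{0..<CARD('n)}. complex_of_real (S $ h i $ h k * T $ h k $ h j))"
    using i' j' by (simp add: CM_def scalar_prod_def row_def col_def)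
  also have "\<dots> = (\<Sum>x\<in>UNIV. complex_of_real (S $ h i $ x * T $ x $ h j))"
    using sum.reindex_bij_betw[OF h, of "\<lambda>x. complex_of_real (S $ h i $ x * T $ x $ h j)"] by simp
  also have "\<dots> = CM h (S ** T) $$ (i,j)"
    using i' j' by (simp add: CM_def matrix_matrix_mult_def)
  finally show "CM h (S ** T) $$ (i, j) = (CM h S * CM h T) $$ (i, j)" by simp
qed (auto simp: CM_def)

lemma CM_one:
  assumes h: "bij_betw h {0..<CARD('n)} (UNIV::'n::finite set)"
  shows "CM h (idm::real^'n^'n) = 1\<^sub>m CARD('n)"
proof (rule eq_matI)
  fix i j assume "i < dim_row (1\<^sub>m CARD('n))" "j < dim_col (1\<^sub>m CARD('n))"
  hence i: "i < CARD('n)" and j: "j < CARD('n)" by auto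
  have "h i = h j \<longleftrightarrow> i = j" using h i j unfolding bij_betw_def inj_on_def by auto
  thus "CM h idm $$ (i, j) = 1\<^sub>m CARD('n) $$ (i, j)"
    using i j by (simp add: CM_def Finite_Cartesian_Product.mat_def)
qed (auto simp: CM_def)

lemma CM_mp:
  assumes h: "bij_betw h {0..<CARD('n)} (UNIV::'n::finite set)"
  shows "CM h (mp (S::real^'n^'n) k) = CM h S ^\<^sub>m k"
  by (induction k) (simp_all add: CM_one[OF h] CM_mult[OF h])

lemma CM_eig:
  assumes h: "bij_betw h {0..<CARD('n)} (UNIV::'n::finite set)"
    and ev: "Char_Poly.eigenvalue (CM h (S::real^'n^'n)) \<mu>"
  shows "Defs.eigenvalue S \<mu>"
proof -
  let ?n = "CARD('n)"
  from ev obtain v where v: "v \<in> carrier_vec ?n" "v \<noteq> 0\<^sub>v ?n" "CM h S *\<^sub>v v = \<mu> \<cdot>\<^sub>v v"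
    unfolding Char_Poly.eigenvalue_def eigenvector_def by (auto simp: CM_def)
  define g where "g = inv_into {0..<?n} h"
  have g1: "g x < ?n" for x unfolding g_def using h
    by (metis atLeastLessThan_iff bij_betw_def inv_into_into UNIV_I)
  have g2: "h (g x) = x" for x unfolding g_def using h
    by (metis bij_betw_def f_inv_into_f UNIV_I)
  have g3: "i < ?n \<Longrightarrow> g (h i) = i" for i unfolding g_def using h
    by (simp add: bij_betw_def inv_into_f_f)
  define w :: "complex^'n" where "w = (\<chi> x. vec_index v (g x))"
  have "cmat S *v w = \<mu> *s w"
  proof (rule Finite_Cartesian_Product.vec_eq_iff[THEN iffD2], rule allI)
    fix x
    have "(cmat S *v w) $ x = (\<Sum>y\<in>UNIV. complex_of_real (S $ x $ y) * vec_index v (g y))"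
      by (simp add: cmat_def w_def matrix_vector_mult_def)
    also have "\<dots> = (\<Sum>k\<in>{0..<?n}. complex_of_real (S $ x $ h k) * vec_index v (g (h k)))"
      using sum.reindex_bij_betw[OF h, of "\<lambda>y. complex_of_real (S $ x $ y) * vec_index v (g y)"] by simp
    also have "\<dots> = (\<Sum>k\<in>{0..<?n}. complex_of_real (S $ h (g x) $ h k) * vec_index v k)"
      using g2 g3 by simp
    also have "\<dots> = vec_index (CM h S *\<^sub>v v) (g x)"
      using g1 v(1) by (simp add: CM_def Matrix.scalar_prod_def row_def)
    also have "\<dots> = \<mu> * vec_index v (g x)" using v(3) g1 v(1) by simp
    also have "\<dots> = (\<mu> *s w) $ x" by (simp add: w_def)
    finally show "(cmat S *v w) $ x = (\<mu> *s w) $ x" .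
  qed
  moreover have "w \<noteq> 0"
  proof
    assume w0: "w = 0"
    have "v = 0\<^sub>v ?n"
    proof (rule eq_vecI)
      fix i assume "i < dim_vec (0\<^sub>v ?n)"
      hence i: "i < ?n" by simp
      have "vec_index v i = w $ h i" using g3[OF i] by (simp add: w_def)
      thus "vec_index v i = vec_index (0\<^sub>v ?n) i" using w0 i by simp
    qed (use v(1) in simp)
    with v(2) show False by simp
  qed
  ultimately show ?thesis unfolding Defs.eigenvalue_def by blast
qed

lemma decay:
  fixes S :: "real^'n^'n"
  assumes ev: "\<And>\<mu>. Defs.eigenvalue S \<mu> \<Longrightarrow> cmod \<mu> < 1"
  shows "\<exists>c r. 0 \<le> r \<and> r < 1 \<and> (\<forall>k x y. \<bar>mp S k $ x $ y\<bar> \<le> c * r^k)"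
proof -
  let ?n = "CARD('n)"
  obtain h where h: "bij_betw h {0..<?n} (UNIV::'n set)"
    using ex_bij_betw_nat_finite[of "UNIV::'n set"] by auto
  define A where "A = CM h S"
  have A: "A \<in> carrier_mat ?n ?n" unfolding A_def by (rule CM_carrier)
  have n: "?n > 0" by simp
  define \<rho> where "\<rho> = spectral_radius A"
  from spectral_radius_mem_max(1)[OF A n] obtain \<mu>0 where
    \<mu>0: "\<mu>0 \<in> Spectral_Radius.spectrum A" "\<rho> = cmod \<mu>0" unfolding \<rho>_def by auto
  have "cmod \<mu>0 < 1" using ev CM_eig[OF h] \<mu>0(1) unfolding A_def Spectral_Radius.spectrum_def by auto
  hence \<rho>1: "\<rho> < 1" using \<mu>0 by simp
  have \<rho>0: "0 \<le> \<rho>" using \<mu>0 by simp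
  define l where "l = 2 / (1 + \<rho>)"
  have l1: "l > 1" using \<rho>1 \<rho>0 by (simp add: l_def field_simps)
  have l\<rho>: "l * \<rho> < 1" using \<rho>1 \<rho>0 by (simp add: l_def field_simps)
  define A' where "A' = complex_of_real l \<cdot>\<^sub>m A"
  have A': "A' \<in> carrier_mat ?n ?n" using A unfolding A'_def by simp
  have sr': "spectral_radius A' < 1"
  proof -
    from spectral_radius_mem_max(1)[OF A' n] obtain \<mu> where
      \<mu>: "\<mu> \<in> Spectral_Radius.spectrum A'" "spectral_radius A' = cmod \<mu>" by auto
    from \<mu>(1) obtain v where v: "eigenvector A' v \<mu>"
      unfolding Spectral_Radius.spectrum_def Char_Poly.eigenvalue_def by auto
    have "A *\<^sub>v v = (\<mu> / complex_of_real l) \<cdot>\<^sub>v v"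
    proof -
      have "A' *\<^sub>v v = \<mu> \<cdot>\<^sub>v v" using v unfolding eigenvector_def by auto
      moreover have "dim_vec v = dim_col A" using v A A' unfolding eigenvector_def by auto
      ultimately have "complex_of_real l \<cdot>\<^sub>v (A *\<^sub>v v) = \<mu> \<cdot>\<^sub>v v"
        unfolding A'_def by (simp add: smult_mat_vec)
      hence "(1 / complex_of_real l) \<cdot>\<^sub>v (complex_of_real l \<cdot>\<^sub>v (A *\<^sub>v v)) = (\<mu> / complex_of_real l) \<cdot>\<^sub>v v"
        by (simp add: smult_smult_assoc)
      thus ?thesis using l1 by (simp add: smult_smult_assoc)
    qed
    hence "eigenvector A v (\<mu> / complex_of_real l)" using v A A' unfolding eigenvector_def by auto
    hence "\<mu> / complex_of_real l \<in> Spectral_Radius.spectrum A"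
      unfolding Spectral_Radius.spectrum_def Char_Poly.eigenvalue_def by auto
    hence "cmod (\<mu> / complex_of_real l) \<le> \<rho>" unfolding \<rho>_def
      using spectral_radius_mem_max(2)[OF A n] by auto
    hence "cmod \<mu> \<le> l * \<rho>" using l1 by (simp add: norm_divide field_simps)
    thus ?thesis using \<mu>(2) l\<rho> by simp
  qed
  obtain as where "char_poly A' = (\<Prod>a\<leftarrow>as. [:- a, 1:])" using char_poly_factorized[OF A'] by auto
  from jordan_nf_exists[OF A' this] have "\<exists>n_as. jordan_nf A' n_as" .
  from spectral_radius_jnf_norm_bound_less_1[OF A' sr' this] obtain c where
    c: "\<And>k. norm_bound (A' ^\<^sub>m k) c" by auto
  have pw: "A' ^\<^sub>m k = (complex_of_real l ^ k) \<cdot>\<^sub>m (A ^\<^sub>m k)" for k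
  proof (induction k)
    case 0 thus ?case using A A' by (auto simp: A'_def)
  next
    case (Suc k)
    have "A' ^\<^sub>m Suc k = ((complex_of_real l ^ k) \<cdot>\<^sub>m (A ^\<^sub>m k)) * (complex_of_real l \<cdot>\<^sub>m A)"
      using Suc by (simp add: A'_def)
    also have "\<dots> = (complex_of_real l ^ Suc k) \<cdot>\<^sub>m (A ^\<^sub>m Suc k)"
      by (rule eq_matI) (use A in \<open>auto simp: Matrix.scalar_prod_def row_def col_def sum_distrib_left mult_ac intro!: sum.cong\<close>)
    finally show ?case .
  qed
  show ?thesis
  proof (intro exI conjI allI)
    show "0 \<le> 1 / l" "1 / l < 1" using l1 by auto
    fix k x y
    define i where "i = inv_into {0..<?n} h x"
    define j where "j = inv_into {0..<?n} h y"
    have i: "i < ?n" "h i = x" unfolding i_def using h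
      by (metis atLeastLessThan_iff bij_betw_def inv_into_into UNIV_I f_inv_into_f)+
    have j: "j < ?n" "h j = y" unfolding j_def using h
      by (metis atLeastLessThan_iff bij_betw_def inv_into_into UNIV_I f_inv_into_f)+
    have "(A ^\<^sub>m k) $$ (i,j) = complex_of_real (mp S k $ x $ y)"
      using i j unfolding A_def CM_mp[OF h, symmetric] by (simp add: CM_def)
    moreover have "norm ((A' ^\<^sub>m k) $$ (i,j)) \<le> c"
      using c[of k] i j A unfolding norm_bound_def by (auto simp: A'_def)
    ultimately have "l^k * \<bar>mp S k $ x $ y\<bar> \<le> c"
      using i j A l1 unfolding pw by (simp add: norm_mult norm_power)
    hence "\<bar>mp S k $ x $ y\<bar> \<le> c / l^k" using l1 by (simp add: field_simps)
    thus "\<bar>mp S k $ x $ y\<bar> \<le> c * (1/l)^k" by (simp add: power_one_over)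
  qed
qed

lemma cmat_mult: "cmat (A ** B) = cmat A ** cmat B"
  by (simp add: cmat_def matrix_matrix_mult_def Finite_Cartesian_Product.vec_eq_iff)

lemma cmat_add: "cmat (A + B) = cmat A + cmat B"
  by (simp add: cmat_def Finite_Cartesian_Product.vec_eq_iff)

lemma cmat_diff: "cmat (A - B) = cmat A - cmat B"
  by (simp add: cmat_def Finite_Cartesian_Product.vec_eq_iff)

lemma cmat_id: "cmat (idm::real^'n^'n) = idm"
  by (simp add: cmat_def Finite_Cartesian_Product.mat_def Finite_Cartesian_Product.vec_eq_iff)

lemma Re_div_neg_imp: 
  assumes "Re ((\<mu> - 1) / (\<mu> + 1)) < 0" shows "cmod \<mu> < 1"
proof -
  have "Re ((\<mu> - 1) / (\<mu> + 1)) = ((Re \<mu>)^2 + (Im \<mu>)^2 - 1) / ((Re \<mu> + 1)^2 + (Im \<mu>)^2)"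
    by (simp add: Re_divide power2_eq_square algebra_simps)
  with assms have "(Re \<mu>)^2 + (Im \<mu>)^2 < 1"
    by (smt (verit, ccfv_threshold) divide_nonneg_nonneg zero_le_power2)
  thus ?thesis unfolding cmod_def by (simp add: real_sqrt_lt_1_iff)
qed

lemma hurwitz_inv:
  fixes M :: "real^'n^'n"
  assumes "hurwitz M"
  shows "invertible (idm - M)"
proof -
  have "\<forall>x. (idm - M) *v x = 0 \<longrightarrow> x = 0"
  proof (intro allI impI)
    fix x assume x: "(idm - M) *v x = 0"
    show "x = 0"
    proof (rule ccontr)
      assume "x \<noteq> 0"
      define z :: "complex^'n" where "z = (\<chi> i. complex_of_real (x $ i))"
      have Mx: "M *v x = x" using x by (simp add: matrix_vector_mult_diff_rdistrib)
      have "cmat M *v z = 1 *s z"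
      proof -
        have "cmat M *v z = (\<chi> i. complex_of_real ((M *v x) $ i))"
          by (simp add: cmat_def z_def matrix_vector_mult_def Finite_Cartesian_Product.vec_eq_iff)
        thus ?thesis using Mx by (simp add: z_def Finite_Cartesian_Product.vec_eq_iff)
      qed
      moreover have "z \<noteq> 0" using \<open>x \<noteq> 0\<close>
        by (simp add: z_def Finite_Cartesian_Product.vec_eq_iff)
      ultimately have "Defs.eigenvalue M 1" unfolding Defs.eigenvalue_def by blast
      with assms show False unfolding hurwitz_def by fastforce
    qed
  qed
  thus ?thesis using matrix_left_invertible_ker invertible_left_inverse by blast
qed

lemma inv_both:
  fixes A :: "real^'n^'n"
  assumes "invertible A"
  shows "A ** matrix_inv A = idm" "matrix_inv A ** A = idm"
  using assms unfolding invertible_def matrix_inv_def by (metis (mono_tags, lifting) someI_ex)+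

lemma qf_transp:
  fixes A :: "real^'n^'m" and B :: "real^'m^'m"
  shows "x \<bullet> ((transpose A ** B ** A) *v x) = (A *v x) \<bullet> (B *v (A *v x))"
proof -
  have "(transpose A ** B ** A) *v x = transpose A *v (B *v (A *v x))"
    by (simp add: matrix_vector_mul_assoc matrix_mul_assoc)
  also have "\<dots> = (B *v (A *v x)) v* A" by simp
  finally have "x \<bullet> ((transpose A ** B ** A) *v x) = ((B *v (A *v x)) v* A) \<bullet> x"
    by (simp add: inner_commute)
  also have "\<dots> = (B *v (A *v x)) \<bullet> (A *v x)" by (rule dot_lmul_matrix)
  finally show ?thesis by (simp add: inner_commute)
qed

lemma qf_add: "x \<bullet> ((A + B) *v x) = x \<bullet> (A *v x) + x \<bullet> (B *v (x::real^'n))"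
  by (simp add: matrix_vector_mult_add_rdistrib inner_add_right)

lemma qf_diff: "x \<bullet> ((A - B) *v x) = x \<bullet> (A *v x) - x \<bullet> (B *v (x::real^'n))"
  by (simp add: matrix_vector_mult_diff_rdistrib inner_diff_right)

lemma qf_scale: "x \<bullet> ((c *\<^sub>R A) *v x) = c * (x \<bullet> (A *v (x::real^'n)))"
  by (simp add: matrix_vector_mult_def inner_vec_def Finite_Cartesian_Product.vec_eq_iff sum_distrib_left algebra_simps)

lemma cayley_eig:
  fixes M :: "real^'n^'n"
  assumes hM: "hurwitz M"
  defines "N \<equiv> matrix_inv (idm - M)"
  assumes ev: "Defs.eigenvalue ((idm + M) ** N) \<mu>"
  shows "cmod \<mu> < 1"
proof -
  have inv: "invertible (idm - M)" by (rule hurwitz_inv[OF hM])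
  note NI = inv_both[OF inv, folded N_def]
  from ev obtain z where z: "z \<noteq> 0" "cmat ((idm + M) ** N) *v z = \<mu> *s z"
    unfolding Defs.eigenvalue_def by auto
  define u where "u = cmat N *v z"
  have zu: "z = cmat (idm - M) *v u"
    unfolding u_def by (simp add: matrix_vector_mul_assoc cmat_mult[symmetric] NI cmat_id)
  have u0: "u \<noteq> 0" using zu z(1) by auto
  have "cmat (idm + M) *v u = \<mu> *s z"
    using z(2) unfolding u_def by (simp add: matrix_vector_mul_assoc cmat_mult)
  hence eq: "u + cmat M *v u = \<mu> *s (u - cmat M *v u)"
    unfolding zu by (simp add: cmat_add cmat_diff cmat_id matrix_vector_mult_add_rdistrib matrix_vector_mult_diff_rdistrib)
  define y where "y = cmat M *v u"
  have eqi: "u $ i + y $ i = \<mu> * (u $ i - y $ i)" for i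
    using arg_cong[OF eq[folded y_def], of "\<lambda>v. v $ i"] by (simp add: algebra_simps)
  have mu1: "\<mu> + 1 \<noteq> 0"
  proof
    assume "\<mu> + 1 = 0"
    hence "\<mu> = -1" by (simp add: add_eq_0_iff2)
    have "u $ i = 0" for i
    proof -
      have "u $ i + y $ i = - (u $ i - y $ i)" using eqi[of i] \<open>\<mu> = -1\<close> by simp
      thus ?thesis by simp
    qed
    with u0 show False by (simp add: Finite_Cartesian_Product.vec_eq_iff)
  qed
  define lam where "lam = (\<mu> - 1) / (\<mu> + 1)"
  have "y $ i = lam * u $ i" for i
  proof -
    have "(\<mu> + 1) * y $ i = (\<mu> - 1) * u $ i" using eqi[of i] by (simp add: algebra_simps)
    thus ?thesis using mu1 unfolding lam_def by (simp add: field_simps)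
  qed
  hence "cmat M *v u = lam *s u" unfolding y_def by (simp add: Finite_Cartesian_Product.vec_eq_iff)
  hence "Defs.eigenvalue M lam" using u0 unfolding Defs.eigenvalue_def by blast
  hence "Re lam < 0" using hM unfolding hurwitz_def by blast
  thus ?thesis unfolding lam_def by (rule Re_div_neg_imp)
qed

definition psd :: "real^'n^'n \<Rightarrow> bool" where
  "psd M \<longleftrightarrow> (\<forall>x. 0 \<le> x \<bullet> (M *v x))"

lemma mv_neg: "(- A) *v x = - (A *v (x::real^'n))"
  by (simp add: matrix_vector_mult_def Finite_Cartesian_Product.vec_eq_iff sum_negf)

lemma qf_neg: "x \<bullet> ((- A) *v x) = - (x \<bullet> (A *v (x::real^'n)))"
  by (simp add: mv_neg)

lemma inner_transp: "x \<bullet> (transpose A *v y) = (A *v x) \<bullet> (y::real^'m)"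
proof -
  have "x \<bullet> (transpose A *v y) = (y v* A) \<bullet> x" by (simp add: inner_commute)
  also have "\<dots> = y \<bullet> (A *v x)" by (rule dot_lmul_matrix)
  finally show ?thesis by (simp add: inner_commute)
qed

lemma mp_Suc_left: "mp S k ** S = S ** mp S k"
  by (induction k) (simp_all add: matrix_mul_assoc[symmetric])

lemma lyap_psd:
  fixes M X C :: "real^'n^'n"
  assumes hM: "hurwitz M" and eq: "transpose M ** X + X ** M + C = 0" and pC: "psd C"
  shows "psd X"
proof -
  define N where "N = matrix_inv (idm - M)"
  have inv: "invertible (idm - M)" by (rule hurwitz_inv[OF hM])
  note NI = inv_both[OF inv, folded N_def]
  define S where "S = (idm + M) ** N"
  define q where "q w = w \<bullet> (X *v w)" for w
  have step: "q (S *v w) \<le> q w" for w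
  proof -
    define u where "u = N *v w"
    define b where "b = M *v u"
    have w: "w = u - b"
    proof -
      have "(idm - M) *v u = w" unfolding u_def by (simp add: matrix_vector_mul_assoc NI)
      thus ?thesis unfolding b_def by (simp add: matrix_vector_mult_diff_rdistrib)
    qed
    have Sw: "S *v w = u + b" unfolding S_def u_def b_def
      by (simp add: matrix_vector_mul_assoc[symmetric] matrix_vector_mult_add_rdistrib)
    have C: "u \<bullet> (C *v u) = - (u \<bullet> (X *v b) + b \<bullet> (X *v u))"
    proof -
      have "C = - (transpose M ** X + X ** M)" by (metis add.commute eq eq_neg_iff_add_eq_0)
      hence "u \<bullet> (C *v u) = - (u \<bullet> ((transpose M ** X) *v u) + u \<bullet> ((X ** M) *v u))"
        by (simp add: qf_neg qf_add qf_diff)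
      also have "u \<bullet> ((transpose M ** X) *v u) = b \<bullet> (X *v u)"
        unfolding b_def by (simp only: matrix_vector_mul_assoc[symmetric] inner_transp)
      also have "u \<bullet> ((X ** M) *v u) = u \<bullet> (X *v b)"
        unfolding b_def by (simp add: matrix_vector_mul_assoc[symmetric])
      finally show ?thesis by simp
    qed
    have e1: "q (S *v w) = q (u + b)" by (simp only: Sw)
    have e2: "q w = q (u - b)" using w by simp
    have "q w - q (S *v w) = 2 * (u \<bullet> (C *v u))"
      unfolding e1 e2 unfolding q_def C
      by (simp add: matrix_vector_right_distrib inner_add_left inner_add_right inner_diff_left inner_diff_right algebra_simps)
    moreover have "0 \<le> u \<bullet> (C *v u)" using pC unfolding psd_def by blast
    ultimately show ?thesis by simp
  qed
  have iter: "q (mp S k *v w) \<le> q w" for k w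
  proof (induction k arbitrary: w)
    case 0 thus ?case by simp
  next
    case (Suc k)
    have "mp S (Suc k) *v w = mp S k *v (S *v w)" by (simp add: matrix_vector_mul_assoc)
    hence "q (mp S (Suc k) *v w) = q (mp S k *v (S *v w))" by simp
    also have "\<dots> \<le> q (S *v w)" by (rule Suc)
    also have "\<dots> \<le> q w" by (rule step)
    finally show ?case .
  qed
  have evS: "cmod \<mu> < 1" if "Defs.eigenvalue S \<mu>" for \<mu>
    using cayley_eig[OF hM, of \<mu>] that unfolding S_def N_def by simp
  obtain c r where cr: "0 \<le> r" "r < 1" "\<And>k x y. \<bar>mp S k $ x $ y\<bar> \<le> c * r^k"
    using decay[of S, OF evS] by blast
  show ?thesis unfolding psd_def
  proof
    fix w :: "real^'n"
    have lim0: "(\<lambda>k. mp S k *v w) \<longlonglongrightarrow> 0"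
    proof (rule vec_tendstoI)
      fix i
      have bnd: "\<bar>(mp S k *v w) $ i\<bar> \<le> (c * (\<Sum>j\<in>UNIV. \<bar>w $ j\<bar>)) * r^k" for k
      proof -
        have "\<bar>(mp S k *v w) $ i\<bar> \<le> (\<Sum>j\<in>UNIV. \<bar>mp S k $ i $ j\<bar> * \<bar>w $ j\<bar>)"
          by (simp add: matrix_vector_mult_def abs_mult[symmetric] sum_abs)
        also have "\<dots> \<le> (\<Sum>j\<in>UNIV. c * r^k * \<bar>w $ j\<bar>)"
          by (intro sum_mono mult_right_mono cr(3)) simp
        finally show ?thesis by (simp add: sum_distrib_left mult_ac)
      qed
      have "(\<lambda>k. (c * (\<Sum>j\<in>UNIV. \<bar>w $ j\<bar>)) * r^k) \<longlonglongrightarrow> (c * (\<Sum>j\<in>UNIV. \<bar>w $ j\<bar>)) * 0"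
        by (intro tendsto_mult tendsto_const LIMSEQ_power_zero) (use cr in simp)
      hence lim: "(\<lambda>k. (c * (\<Sum>j\<in>UNIV. \<bar>w $ j\<bar>)) * r^k) \<longlonglongrightarrow> 0" by simp
      have "(\<lambda>k. \<bar>(mp S k *v w) $ i\<bar>) \<longlonglongrightarrow> 0"
        by (rule tendsto_sandwich[OF _ _ tendsto_const lim]) (simp_all add: bnd)
      thus "(\<lambda>k. (mp S k *v w) $ i) \<longlonglongrightarrow> 0 $ i" by (simp add: tendsto_rabs_zero_iff)
    qed
    have "(\<lambda>k. q (mp S k *v w)) \<longlonglongrightarrow> q 0"
      unfolding q_def by (intro tendsto_inner lim0 bounded_linear.tendsto[OF matrix_vector_mul_bounded_linear])
    hence "q 0 \<le> q w" by (rule LIMSEQ_le_const2) (use iter in auto)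
    thus "0 \<le> w \<bullet> (X *v w)" by (simp add: q_def)
  qed
qed

lemma sym_inner: "symmetric_mat P \<Longrightarrow> u \<bullet> (P *v v) = (P *v u) \<bullet> (v::real^'n)"
  unfolding symmetric_mat_def by (metis inner_transp)

lemma lyap_form: "symmetric_mat P \<Longrightarrow> v \<bullet> ((transpose M ** P + P ** M) *v v) = 2 * ((M *v v) \<bullet> (P *v v))"
proof -
  assume sP: "symmetric_mat P"
  have 1: "v \<bullet> ((transpose M ** P) *v v) = (M *v v) \<bullet> (P *v v)"
    by (simp only: matrix_vector_mul_assoc[symmetric] inner_transp)
  have 2: "v \<bullet> ((P ** M) *v v) = (M *v v) \<bullet> (P *v v)"
  proof -
    have "v \<bullet> ((P ** M) *v v) = v \<bullet> (P *v (M *v v))" by (simp only: matrix_vector_mul_assoc)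
    also have "\<dots> = (P *v v) \<bullet> (M *v v)" by (rule sym_inner[OF sP])
    finally show ?thesis by (simp only: inner_commute)
  qed
  show ?thesis by (simp only: qf_add 1 2)
qed

lemma lyap_hurwitz:
  fixes M P :: "real^'n^'n"
  assumes sP: "symmetric_mat P" and pP: "\<And>x. x \<noteq> 0 \<Longrightarrow> 0 < x \<bullet> (P *v x)"
    and nL: "\<And>x. x \<noteq> 0 \<Longrightarrow> x \<bullet> ((transpose M ** P + P ** M) *v x) < 0"
  shows "hurwitz M"
  unfolding hurwitz_def
proof (intro allI impI)
  fix c assume "Defs.eigenvalue M c"
  then obtain z where z: "z \<noteq> 0" "cmat M *v z = c *s z" unfolding Defs.eigenvalue_def by auto
  define x where "x = (\<chi> i. Re (z $ i))"
  define y where "y = (\<chi> i. Im (z $ i))"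
  define a where "a = Re c"
  define b where "b = Im c"
  have comp: "(\<Sum>j\<in>UNIV. complex_of_real (M $ i $ j) * z $ j) = c * z $ i" for i
    using arg_cong[OF z(2), of "\<lambda>v. v $ i"] by (simp add: cmat_def matrix_vector_mult_def)
  have Mx: "M *v x = a *\<^sub>R x - b *\<^sub>R y"
  proof (rule Finite_Cartesian_Product.vec_eq_iff[THEN iffD2], rule allI)
    fix i
    have "Re (\<Sum>j\<in>UNIV. complex_of_real (M $ i $ j) * z $ j) = Re (c * z $ i)" using comp[of i] by simp
    thus "(M *v x) $ i = (a *\<^sub>R x - b *\<^sub>R y) $ i"
      by (simp add: matrix_vector_mult_def x_def y_def a_def b_def Re_sum)
  qed
  have My: "M *v y = b *\<^sub>R x + a *\<^sub>R y"
  proof (rule Finite_Cartesian_Product.vec_eq_iff[THEN iffD2], rule allI)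
    fix i
    have "Im (\<Sum>j\<in>UNIV. complex_of_real (M $ i $ j) * z $ j) = Im (c * z $ i)" using comp[of i] by simp
    thus "(M *v y) $ i = (b *\<^sub>R x + a *\<^sub>R y) $ i"
      by (simp add: matrix_vector_mult_def x_def y_def a_def b_def Im_sum algebra_simps)
  qed
  let ?L = "transpose M ** P + P ** M"
  have nL': "v \<bullet> (?L *v v) \<le> 0" for v
    using nL[of v] by (cases "v = 0") (auto simp: less_imp_le)
  have pP': "0 \<le> v \<bullet> (P *v v)" for v
    using pP[of v] by (cases "v = 0") (auto simp: less_imp_le)
  have xy: "x \<noteq> 0 \<or> y \<noteq> 0"
  proof (rule ccontr)
    assume "\<not> (x \<noteq> 0 \<or> y \<noteq> 0)"
    hence "x = 0" "y = 0" by auto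
    have "z $ i = 0" for i
    proof -
      have "Re (z $ i) = 0" using arg_cong[OF \<open>x = 0\<close>, of "\<lambda>v. v $ i"] by (simp add: x_def)
      moreover have "Im (z $ i) = 0" using arg_cong[OF \<open>y = 0\<close>, of "\<lambda>v. v $ i"] by (simp add: y_def)
      ultimately show ?thesis by (simp add: complex_eq_iff)
    qed
    with z(1) show False by (simp add: Finite_Cartesian_Product.vec_eq_iff)
  qed
  have lt: "x \<bullet> (?L *v x) + y \<bullet> (?L *v y) < 0"
    using xy nL'[of x] nL'[of y] nL[of x] nL[of y] by auto
  have pos: "0 < x \<bullet> (P *v x) + y \<bullet> (P *v y)"
    using xy pP'[of x] pP'[of y] pP[of x] pP[of y] by auto
  have e1: "x \<bullet> (?L *v x) = 2 * (a * (x \<bullet> (P *v x)) - b * (y \<bullet> (P *v x)))"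
    unfolding lyap_form[OF sP] Mx by (simp add: inner_diff_left)
  have e2: "y \<bullet> (?L *v y) = 2 * (b * (x \<bullet> (P *v y)) + a * (y \<bullet> (P *v y)))"
    unfolding lyap_form[OF sP] My by (simp add: inner_add_left)
  have e3: "y \<bullet> (P *v x) = x \<bullet> (P *v y)"
    using sym_inner[OF sP, of y x] by (simp add: inner_commute)
  have "x \<bullet> (?L *v x) + y \<bullet> (?L *v y) = 2 * a * (x \<bullet> (P *v x) + y \<bullet> (P *v y))"
    unfolding e1 e2 e3 by (simp add: algebra_simps)
  with lt have "(2 * a) * (x \<bullet> (P *v x) + y \<bullet> (P *v y)) < 0" by simp
  with pos have "2 * a < 0" by (simp add: mult_less_0_iff)
  hence "a < 0" by simp
  thus "Re c < 0" by (simp add: a_def)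
qed

lemma matrix_add_rdistrib: "((B + C) ** A) = (B ** A) + (C ** (A::'a::semiring_1^_^_))"
  by (vector matrix_matrix_mult_def sum.distrib[symmetric] field_simps)

lemma matrix_sub_ldistrib: "(A ** (B - C)) = (A ** B) - (A ** (C::'a::ring_1^_^_))"
  by (vector matrix_matrix_mult_def sum_subtractf[symmetric] field_simps)

lemma matrix_sub_rdistrib: "((B - C) ** A) = (B ** A) - (C ** (A::'a::ring_1^_^_))"
  by (vector matrix_matrix_mult_def sum_subtractf[symmetric] field_simps)

lemma matrix_neg_left: "((- B) ** A) = - (B ** (A::'a::ring_1^_^_))"
  by (vector matrix_matrix_mult_def sum_negf[symmetric])

lemma matrix_neg_right: "(A ** (- B)) = - (A ** (B::'a::ring_1^_^_))"
  by (vector matrix_matrix_mult_def sum_negf[symmetric])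

lemma transpose_add: "transpose (A + B) = transpose A + transpose (B::'a::semiring_1^_^_)"
  by (simp add: transpose_def Finite_Cartesian_Product.vec_eq_iff)

lemma transpose_diff: "transpose (A - B) = transpose A - transpose (B::'a::ring_1^_^_)"
  by (simp add: transpose_def Finite_Cartesian_Product.vec_eq_iff)

lemma transpose_neg: "transpose (- A) = - transpose (A::'a::ring_1^_^_)"
  by (simp add: transpose_def Finite_Cartesian_Product.vec_eq_iff)

lemma transpose_zero: "transpose (0::'a::semiring_1^'n^'m) = 0"
  by (simp add: transpose_def Finite_Cartesian_Product.vec_eq_iff)

lemma scaleR_mult_left: "(c *\<^sub>R A) ** B = c *\<^sub>R (A ** (B::real^_^_))"
  by (simp add: scalar_matrix_assoc)

lemma scaleR_mult_right: "A ** (c *\<^sub>R B) = c *\<^sub>R (A ** (B::real^_^_))"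
  by (simp add: matrix_scalar_ac scalar_matrix_assoc)

lemmas mat_simps = matrix_add_ldistrib matrix_add_rdistrib matrix_sub_ldistrib matrix_sub_rdistrib
  matrix_neg_left matrix_neg_right transpose_add transpose_diff transpose_neg matrix_transpose_mul
  matrix_mul_assoc[symmetric] transpose_transpose scaleR_mult_left scaleR_mult_right transpose_scalar

section \<open>Norms\<close>

lemma norm_sq_rows: "norm (M::real^'n^'m) ^ 2 = (\<Sum>i\<in>UNIV. norm (M $ i) ^ 2)"
  by (simp add: power2_norm_eq_inner inner_vec_def)

lemma norm_sq_vec: "norm (x::real^'n) ^ 2 = (\<Sum>i\<in>UNIV. (x $ i)^2)"
  unfolding power2_norm_eq_inner inner_vec_def by (simp add: power2_eq_square)

lemma norm_sq_mat: "norm (M::real^'n^'m) ^ 2 = (\<Sum>i\<in>UNIV. \<Sum>j\<in>UNIV. (M $ i $ j)^2)"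
  by (simp add: norm_sq_rows norm_sq_vec)

lemma frob_norm: "frob M = norm M"
  unfolding frob_def norm_sq_mat[symmetric] by simp

lemma norm_mv: "norm (A *v x) \<le> norm (A::real^'n^'m) * norm x"
proof -
  have "norm (A *v x) ^ 2 = (\<Sum>i\<in>UNIV. (A $ i \<bullet> x)^2)"
    by (simp add: norm_sq_vec matrix_vector_mul_component)
  also have "\<dots> \<le> (\<Sum>i\<in>UNIV. (norm (A $ i) * norm x)^2)"
    by (intro sum_mono) (metis Cauchy_Schwarz_ineq2 abs_ge_zero power2_abs power_mono)
  also have "\<dots> = norm A ^ 2 * norm x ^ 2"
    by (simp add: power_mult_distrib sum_distrib_right[symmetric] norm_sq_rows[of A])
  finally have "norm (A *v x) ^ 2 \<le> (norm A * norm x) ^ 2" by (simp add: power_mult_distrib)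
  thus ?thesis by (rule power2_le_imp_le) simp
qed

lemma norm_transpose: "norm (transpose (A::real^'n^'m)) = norm A"
proof -
  have "norm (transpose A) ^ 2 = norm A ^ 2"
    unfolding norm_sq_mat by (simp add: transpose_def) (rule sum.swap)
  thus ?thesis by (simp add: power2_eq_iff_nonneg)
qed

lemma norm_mm: "norm (A ** B) \<le> norm (A::real^'n^'m) * norm (B::real^'p^'n)"
proof -
  have row: "(A ** B) $ i = transpose B *v (A $ i)" for i
    by (simp add: matrix_matrix_mult_def matrix_vector_mult_def transpose_def Finite_Cartesian_Product.vec_eq_iff mult.commute)
  have "norm (A ** B) ^ 2 = (\<Sum>i\<in>UNIV. norm ((A ** B) $ i) ^ 2)"
    by (rule norm_sq_rows)
  also have "\<dots> \<le> (\<Sum>i\<in>UNIV. (norm B * norm (A $ i)) ^ 2)"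
  proof (intro sum_mono power_mono)
    fix i
    have "norm (transpose B *v (A $ i)) \<le> norm B * norm (A $ i)"
      using norm_mv[of "transpose B" "A $ i"] unfolding norm_transpose .
    thus "norm ((A ** B) $ i) \<le> norm B * norm (A $ i)" unfolding row .
  qed simp
  also have "\<dots> = (norm A * norm B) ^ 2"
    by (simp add: power_mult_distrib sum_distrib_left[symmetric] norm_sq_rows[of A] mult.commute)
  finally show ?thesis by (rule power2_le_imp_le) simp
qed

lemma qf_bound: "\<bar>x \<bullet> (M *v x)\<bar> \<le> norm (M::real^'n^'n) * norm x ^ 2"
proof -
  have "\<bar>x \<bullet> (M *v x)\<bar> \<le> norm x * norm (M *v x)" by (rule Cauchy_Schwarz_ineq2)
  also have "\<dots> \<le> norm x * (norm M * norm x)" by (intro mult_left_mono norm_mv) simp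
  finally show ?thesis by (simp add: power2_eq_square mult_ac)
qed

section \<open>Trace\<close>

lemma axis_qf: "axis i 1 \<bullet> (D *v axis j 1) = (D::real^'n^'n) $ i $ j"
  by (simp add: inner_axis' matrix_vector_mult_basis column_def)

lemma trace_qf: "trace (M::real^'n^'n) = (\<Sum>j\<in>UNIV. axis j 1 \<bullet> (M *v axis j 1))"
  by (simp add: trace_def axis_qf)

lemma psd_trace: "psd M \<Longrightarrow> 0 \<le> trace M"
  unfolding trace_qf psd_def by (simp add: sum_nonneg)

lemma trace_transpose: "trace (transpose M) = trace (M::real^'n^'n)"
  by (simp add: trace_def transpose_def)

lemma trace_scaleR: "trace (c *\<^sub>R M) = c * trace (M::real^'n^'n)"
  by (simp add: trace_def sum_distrib_left)

lemma trace_bound: "\<bar>trace (Z ** M)\<bar> \<le> norm (Z::real^'n^'n) * norm (M::real^'n^'n)"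
proof -
  have "trace (Z ** M) = Z \<bullet> transpose M"
    by (simp add: trace_def matrix_matrix_mult_def inner_vec_def transpose_def)
  also have "\<bar>\<dots>\<bar> \<le> norm Z * norm (transpose M)" by (rule Cauchy_Schwarz_ineq2)
  finally show ?thesis by (simp add: norm_transpose)
qed

lemma quad_disc:
  fixes a b c :: real
  assumes "\<And>t. 0 \<le> a * t^2 + 2 * b * t + c" and "0 \<le> a"
  shows "b^2 \<le> a * c"
proof (cases "a = 0")
  case True
  show ?thesis
  proof (cases "b = 0")
    case False
    have "0 \<le> a * (-(c+1)/(2*b))^2 + 2 * b * (-(c+1)/(2*b)) + c" by (rule assms(1))
    with True False show ?thesis by (simp add: field_simps)
  qed (use True assms(1)[of 0] in simp)
next
  case False
  hence a: "a > 0" using assms(2) by simp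
  have "0 \<le> a * (-b/a)^2 + 2 * b * (-b/a) + c" by (rule assms(1))
  hence "0 \<le> (c * a - b^2) / a" using a by (simp add: field_simps power2_eq_square)
  hence "0 \<le> c * a - b^2" using a by (simp add: divide_nonneg_pos zero_le_divide_iff)
  thus ?thesis by (simp add: mult.commute)
qed

lemma psd_entry:
  fixes D :: "real^'n^'n"
  assumes s: "symmetric_mat D" and p: "psd D"
  shows "(D $ i $ j)^2 \<le> D $ i $ i * D $ j $ j"
proof -
  have qf: "(t *\<^sub>R axis i 1 + axis j 1) \<bullet> (D *v (t *\<^sub>R axis i 1 + axis j 1))
      = D $ i $ i * t^2 + 2 * D $ i $ j * t + D $ j $ j" for t
  proof -
    have dij: "D $ j $ i = D $ i $ j" using s unfolding symmetric_mat_def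
      by (metis transpose_def vec_lambda_beta)
    show ?thesis
      by (simp add: matrix_vector_right_distrib matrix_vector_mult_scaleR inner_add_left inner_add_right
          axis_qf dij power2_eq_square algebra_simps)
  qed
  have "0 \<le> D $ i $ i * t^2 + 2 * D $ i $ j * t + D $ j $ j" for t
    using p unfolding psd_def qf[symmetric] by blast
  moreover have "0 \<le> D $ i $ i" using p[unfolded psd_def, rule_format, of "axis i 1"]
    by (simp add: axis_qf)
  ultimately show ?thesis by (rule quad_disc)
qed

lemma psd_norm_trace:
  fixes D :: "real^'n^'n"
  assumes s: "symmetric_mat D" and p: "psd D"
  shows "norm D \<le> trace D"
proof -
  have "norm D ^ 2 = (\<Sum>i\<in>UNIV. \<Sum>j\<in>UNIV. (D $ i $ j)^2)" by (rule norm_sq_mat)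
  also have "\<dots> \<le> (\<Sum>i\<in>UNIV. \<Sum>j\<in>UNIV. D $ i $ i * D $ j $ j)"
    by (intro sum_mono psd_entry[OF s p])
  also have "\<dots> = trace D ^ 2"
    by (simp only: trace_def power2_eq_square sum_product)
  finally show ?thesis using psd_trace[OF p] by (rule power2_le_imp_le)
qed

definition lyap :: "real^'n^'n \<Rightarrow> real^'n^'n \<Rightarrow> real^'n^'n \<Rightarrow> bool" where
  "lyap M X C \<longleftrightarrow> transpose M ** X + X ** M + C = 0"

lemma lyap_diff: "lyap M X1 C1 \<Longrightarrow> lyap M X2 C2 \<Longrightarrow> lyap M (X1 - X2) (C1 - C2)"
proof -
  assume a: "lyap M X1 C1" "lyap M X2 C2"
  have "transpose M ** (X1 - X2) + (X1 - X2) ** M + (C1 - C2) = (transpose M ** X1 + X1 ** M + C1) - (transpose M ** X2 + X2 ** M + C2)"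
    by (simp add: matrix_sub_ldistrib matrix_sub_rdistrib algebra_simps)
  thus ?thesis using a unfolding lyap_def by simp
qed

lemma lyap_add: "lyap M X1 C1 \<Longrightarrow> lyap M X2 C2 \<Longrightarrow> lyap M (X1 + X2) (C1 + C2)"
proof -
  assume a: "lyap M X1 C1" "lyap M X2 C2"
  have "transpose M ** (X1 + X2) + (X1 + X2) ** M + (C1 + C2) = (transpose M ** X1 + X1 ** M + C1) + (transpose M ** X2 + X2 ** M + C2)"
    by (simp add: matrix_add_ldistrib matrix_add_rdistrib algebra_simps)
  thus ?thesis using a unfolding lyap_def by simp
qed

lemma lyap_scale: "lyap M X C \<Longrightarrow> lyap M (c *\<^sub>R X) (c *\<^sub>R C)"
proof -
  assume a: "lyap M X C"
  have "transpose M ** (c *\<^sub>R X) + (c *\<^sub>R X) ** M + (c *\<^sub>R C) = c *\<^sub>R (transpose M ** X + X ** M + C)"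
    by (simp add: scaleR_mult_left scaleR_mult_right scaleR_add_right)
  thus ?thesis using a unfolding lyap_def by simp
qed

lemma trace_neg: "trace (- X) = - trace (X::real^'n^'n)"
  by (simp add: trace_def sum_negf)

lemma lyap_trace:
  assumes sZ: "symmetric_mat Z" and pZ: "psd Z" and L: "lyap M Z C"
  shows "trace C \<le> 2 * trace Z * norm M"
proof -
  have "C = - (transpose M ** Z + Z ** M)" using L unfolding lyap_def
    by (metis add.commute eq_neg_iff_add_eq_0)
  hence "trace C = - (trace (transpose M ** Z) + trace (Z ** M))"
    by (simp add: trace_add trace_neg trace_sub)
  also have "trace (transpose M ** Z) = trace (Z ** M)"
  proof -
    have "trace (transpose M ** Z) = trace (transpose (transpose Z ** M))"
      by (simp add: matrix_transpose_mul)
    also have "\<dots> = trace (Z ** M)" using sZ unfolding symmetric_mat_def by (simp add: trace_transpose)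
    finally show ?thesis .
  qed
  finally have "trace C = - 2 * trace (Z ** M)" by simp
  also have "\<dots> \<le> 2 * (norm Z * norm M)"
  proof -
    have "- trace (Z ** M) \<le> norm Z * norm M" using trace_bound[of Z M] by linarith
    thus ?thesis by linarith
  qed
  also have "\<dots> \<le> 2 * (trace Z * norm M)"
    using psd_norm_trace[OF sZ pZ] by (intro mult_left_mono mult_right_mono) simp_all
  finally show ?thesis by simp
qed

lemma qf_KRK: fixes a :: "real^'n^'m" and R :: "real^'m^'m" shows "x \<bullet> ((transpose a ** R ** a) *v x) = (a *v x) \<bullet> (R *v (a *v x))"
  by (rule qf_transp)

lemma qf_KRK_upper: fixes a :: "real^'n^'m" and R :: "real^'m^'m" shows "x \<bullet> ((transpose a ** R ** a) *v x) \<le> norm R * norm a ^ 2 * norm x ^ 2"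
proof -
  have "x \<bullet> ((transpose a ** R ** a) *v x) \<le> norm R * norm (a *v x) ^ 2"
    unfolding qf_KRK using qf_bound[of "a *v x" R] by simp
  also have "\<dots> \<le> norm R * (norm a * norm x) ^ 2"
    by (intro mult_left_mono power_mono norm_mv) simp_all
  finally show ?thesis by (simp add: power_mult_distrib mult_ac)
qed

lemma sym_transpose: "symmetric_mat M \<Longrightarrow> transpose M = M"
  unfolding symmetric_mat_def .

locale lqr =
  fixes A :: "real^'n^'n" and B :: "real^'m^'n" and Q :: "real^'n^'n" and R :: "real^'m^'m"
    and Pstar :: "real^'n^'n"
  assumes Qs: "symmetric_mat Q" and Rs: "symmetric_mat R" and Ps: "symmetric_mat Pstar"
    and Rinv: "invertible R"
    and ARE: "transpose A ** Pstar + Pstar ** A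
                - Pstar ** B ** matrix_inv R ** transpose B ** Pstar + Q = 0"
begin

definition "Ri = matrix_inv R"
definition "KS = Ri ** transpose B ** Pstar"
definition "AK K = A - B ** K"

lemma RRi: "R ** Ri = idm" "Ri ** R = idm"
  using inv_both[OF Rinv] unfolding Ri_def by auto

lemma RRi2: "R ** (Ri ** X) = X" "Ri ** (R ** X) = X"
  by (simp_all add: matrix_mul_assoc RRi)

lemma Ri_sym: "transpose Ri = Ri"
proof -
  have "R ** transpose Ri = idm"
    using arg_cong[OF RRi(2), of transpose] sym_transpose[OF Rs] by (simp add: matrix_transpose_mul)
  hence "Ri ** (R ** transpose Ri) = Ri" by simp
  thus ?thesis by (simp add: RRi2)
qed

lemmas syms = sym_transpose[OF Qs] sym_transpose[OF Rs] sym_transpose[OF Ps] Ri_sym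

lemmas alg = mat_simps syms RRi RRi2 KS_def AK_def

lemma ARE': "lyap (AK KS) Pstar (Q + transpose KS ** R ** KS)"
proof -
  have "transpose (AK KS) ** Pstar + Pstar ** AK KS + (Q + transpose KS ** R ** KS)
        = transpose A ** Pstar + Pstar ** A - Pstar ** B ** matrix_inv R ** transpose B ** Pstar + Q"
    apply (simp add: alg Ri_def[symmetric])
    done
  thus ?thesis unfolding lyap_def using ARE by simp
qed

lemma cost_diff:
  assumes sP: "symmetric_mat P" and L: "lyap (AK K) P (Q + transpose K ** R ** K)"
  shows "lyap (AK K) (P - Pstar) (transpose (K - KS) ** R ** (K - KS))"
proof -
  have "transpose (AK K) ** (P - Pstar) + (P - Pstar) ** AK K + transpose (K - KS) ** R ** (K - KS)
     = (transpose (AK K) ** P + P ** AK K + (Q + transpose K ** R ** K))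
       - (transpose A ** Pstar + Pstar ** A - Pstar ** B ** matrix_inv R ** transpose B ** Pstar + Q)"
    apply (simp add: alg Ri_def[symmetric])
    done
  thus ?thesis using L ARE unfolding lyap_def by simp
qed


lemma resid_id:
  assumes sD: "symmetric_mat D"
  shows "transpose (AK K) ** D + D ** AK K + transpose (K - KS) ** R ** (K - KS)
   = transpose (AK KS) ** D + D ** AK KS +
     (transpose (K - KS - Ri ** transpose B ** D) ** R ** (K - KS - Ri ** transpose B ** D)
      - transpose (Ri ** transpose B ** D) ** R ** (Ri ** transpose B ** D))"
  using sym_transpose[OF sD] by (simp add: alg)

lemma resid:
  assumes sP: "symmetric_mat P" and L: "lyap (AK K) P (Q + transpose K ** R ** K)"
  shows "lyap (AK KS) (P - Pstar)
     (transpose (K - Ri ** transpose B ** P) ** R ** (K - Ri ** transpose B ** P)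
      - transpose (Ri ** transpose B ** (P - Pstar)) ** R ** (Ri ** transpose B ** (P - Pstar)))"
proof -
  have sD: "symmetric_mat (P - Pstar)" using sP Ps unfolding symmetric_mat_def by (simp add: transpose_diff)
  have e: "K - KS - Ri ** transpose B ** (P - Pstar) = K - Ri ** transpose B ** P"
    by (simp add: alg)
  show ?thesis using cost_diff[OF sP L] resid_id[OF sD, of K] unfolding lyap_def e by simp
qed

lemma next_id:
  assumes sP: "symmetric_mat P"
  shows "transpose (AK K') ** P + P ** AK K' + (Q + transpose K' ** R ** K')
    = (transpose (AK K) ** P + P ** AK K + (Q + transpose K ** R ** K))
      + (transpose (K' - Ri ** transpose B ** P) ** R ** (K' - Ri ** transpose B ** P)
         - transpose (K - Ri ** transpose B ** P) ** R ** (K - Ri ** transpose B ** P))"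
  using sym_transpose[OF sP] by (simp add: alg)

lemma next_lyap:
  assumes sP: "symmetric_mat P" and L: "lyap (AK K) P (Q + transpose K ** R ** K)"
  shows "lyap (AK K') P (Q + transpose K' ** R ** K'
      - transpose (K' - Ri ** transpose B ** P) ** R ** (K' - Ri ** transpose B ** P)
      + transpose (K - Ri ** transpose B ** P) ** R ** (K - Ri ** transpose B ** P))"
  using next_id[OF sP, of K' K] L unfolding lyap_def by (simp add: algebra_simps)

end

lemma lyap_qf: "lyap M X C \<Longrightarrow> x \<bullet> ((transpose M ** X + X ** M) *v x) = - (x \<bullet> (C *v x))"
  unfolding lyap_def by (metis add.commute eq_neg_iff_add_eq_0 qf_neg)

lemma norm_sq_cols: "(\<Sum>j\<in>UNIV. norm ((a::real^'n^'m) *v axis j 1) ^ 2) = norm a ^ 2"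
proof -
  have "(\<Sum>j\<in>UNIV. norm (a *v axis j 1) ^ 2) = (\<Sum>j\<in>UNIV. \<Sum>i\<in>UNIV. (a $ i $ j)^2)"
    by (simp add: norm_sq_vec matrix_vector_mult_basis column_def)
  also have "\<dots> = (\<Sum>i\<in>UNIV. \<Sum>j\<in>UNIV. (a $ i $ j)^2)" by (rule sum.swap)
  finally show ?thesis by (simp add: norm_sq_mat)
qed

lemma psd_add: "psd X \<Longrightarrow> psd Y \<Longrightarrow> psd (X + Y)"
  unfolding psd_def by (simp add: qf_add)

lemma psd_trace_mono: "psd (Y - X) \<Longrightarrow> trace X \<le> trace Y"
  using psd_trace[of "Y - X"] by (simp add: trace_sub)

locale lqr2 = lqr A B Q R Pstar
  for A :: "real^'n^'n" and B :: "real^'m^'n" and Q :: "real^'n^'n" and R :: "real^'m^'m"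
    and Pstar :: "real^'n^'n" +
  fixes q rho :: real
  assumes q: "q > 0" and Qq: "\<And>x. q * norm x ^ 2 \<le> x \<bullet> (Q *v x)"
    and rho: "rho > 0" and Rr: "\<And>x. rho * norm x ^ 2 \<le> x \<bullet> (R *v x)"
    and Ppd: "\<And>x. x \<noteq> 0 \<Longrightarrow> 0 < x \<bullet> (Pstar *v x)"
begin

lemma R_psd: "0 \<le> x \<bullet> (R *v x)"
  using Rr[of x] rho by (smt (verit) mult_nonneg_nonneg zero_le_power2)

lemma KRK_psd: "0 \<le> x \<bullet> ((transpose a ** R ** a) *v x)"
  unfolding qf_KRK by (rule R_psd)

lemma Pstar_psd: "psd Pstar"
  unfolding psd_def using Ppd by (metis inner_zero_left matrix_vector_mult_0_right order.refl less_imp_le)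

lemma hurwitz_KS: "hurwitz (AK KS)"
proof (rule lyap_hurwitz[OF Ps Ppd])
  fix x :: "real^'n" assume x: "x \<noteq> 0"
  have "x \<bullet> ((transpose (AK KS) ** Pstar + Pstar ** AK KS) *v x)
      = - (x \<bullet> (Q *v x) + x \<bullet> ((transpose KS ** R ** KS) *v x))"
    using lyap_qf[OF ARE'] by (simp add: qf_add)
  moreover have "0 < q * norm x ^ 2" using q x by simp
  ultimately show "x \<bullet> ((transpose (AK KS) ** Pstar + Pstar ** AK KS) *v x) < 0"
    using Qq[of x] KRK_psd[of x KS] by linarith
qed

lemma cost_psd:
  assumes h: "hurwitz (AK K)" and sP: "symmetric_mat P" and L: "lyap (AK K) P (Q + transpose K ** R ** K)"
  shows "psd (P - Pstar)"
  using cost_diff[OF sP L] unfolding lyap_def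
  by (rule lyap_psd[OF h]) (simp add: psd_def KRK_psd)

lemma sym_diff: "symmetric_mat X \<Longrightarrow> symmetric_mat Y \<Longrightarrow> symmetric_mat (X - Y)"
  unfolding symmetric_mat_def by (simp add: transpose_diff)

lemma sym_add: "symmetric_mat X \<Longrightarrow> symmetric_mat Y \<Longrightarrow> symmetric_mat (X + Y)"
  unfolding symmetric_mat_def by (simp add: transpose_add)

lemma sym_scale: "symmetric_mat X \<Longrightarrow> symmetric_mat (c *\<^sub>R X)"
  unfolding symmetric_mat_def by (simp add: transpose_scalar)

lemma resid_bound:
  assumes sP: "symmetric_mat P" and L: "lyap (AK K) P (Q + transpose K ** R ** K)"
  shows "q * trace (P - Pstar) \<le> norm R * norm (K - Ri ** transpose B ** P) ^ 2 * trace Pstar"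
proof -
  define a where "a = K - Ri ** transpose B ** P"
  define b where "b = Ri ** transpose B ** (P - Pstar)"
  define th where "th = norm R * norm a ^ 2 / q"
  have th0: "0 \<le> th" unfolding th_def using q by simp
  have L1: "lyap (AK KS) (th *\<^sub>R Pstar - (P - Pstar))
     (th *\<^sub>R (Q + transpose KS ** R ** KS) - (transpose a ** R ** a - transpose b ** R ** b))"
    unfolding a_def b_def by (intro lyap_diff lyap_scale ARE' resid[OF sP L])
  have "psd (th *\<^sub>R (Q + transpose KS ** R ** KS) - (transpose a ** R ** a - transpose b ** R ** b))"
    unfolding psd_def
  proof
    fix x :: "real^'n"
    have "x \<bullet> ((transpose a ** R ** a) *v x) \<le> th * (q * norm x ^ 2)"
      using qf_KRK_upper[of x a R] q unfolding th_def by (simp add: field_simps)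
    also have "\<dots> \<le> th * (x \<bullet> (Q *v x))" by (intro mult_left_mono Qq th0)
    finally have 1: "x \<bullet> ((transpose a ** R ** a) *v x) \<le> th * (x \<bullet> (Q *v x))" .
    have 2: "0 \<le> th * (x \<bullet> ((transpose KS ** R ** KS) *v x))" by (intro mult_nonneg_nonneg th0 KRK_psd)
    have 3: "0 \<le> x \<bullet> ((transpose b ** R ** b) *v x)" by (rule KRK_psd)
    show "0 \<le> x \<bullet> ((th *\<^sub>R (Q + transpose KS ** R ** KS) - (transpose a ** R ** a - transpose b ** R ** b)) *v x)"
      using 1 2 3 by (simp add: qf_diff qf_add qf_scale algebra_simps)
  qed
  from lyap_psd[OF hurwitz_KS L1[unfolded lyap_def] this]
  have "trace (P - Pstar) \<le> trace (th *\<^sub>R Pstar)" by (rule psd_trace_mono)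
  hence "trace (P - Pstar) \<le> th * trace Pstar" by (simp add: trace_scaleR)
  hence "q * trace (P - Pstar) \<le> q * (th * trace Pstar)" using q by simp
  also have "\<dots> = norm R * norm a ^ 2 * trace Pstar" unfolding th_def using q by simp
  finally show ?thesis unfolding a_def .
qed

lemma next_hurwitz:
  assumes sP: "symmetric_mat P" and L: "lyap (AK K) P (Q + transpose K ** R ** K)"
    and pD: "psd (P - Pstar)"
    and E: "norm R * norm (K' - Ri ** transpose B ** P) ^ 2 < q"
  shows "hurwitz (AK K')"
proof (rule lyap_hurwitz[OF sP])
  fix x :: "real^'n" assume x: "x \<noteq> 0"
  have "0 < x \<bullet> (Pstar *v x)" by (rule Ppd[OF x])
  moreover have "0 \<le> x \<bullet> ((P - Pstar) *v x)" using pD unfolding psd_def by blast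
  ultimately show "0 < x \<bullet> (P *v x)" by (simp add: qf_diff)
next
  fix x :: "real^'n" assume x: "x \<noteq> 0"
  define E where "E = K' - Ri ** transpose B ** P"
  define a where "a = K - Ri ** transpose B ** P"
  have "x \<bullet> ((transpose (AK K') ** P + P ** AK K') *v x)
      = - (x \<bullet> (Q *v x) + x \<bullet> ((transpose K' ** R ** K') *v x)
           - x \<bullet> ((transpose E ** R ** E) *v x) + x \<bullet> ((transpose a ** R ** a) *v x))"
    using lyap_qf[OF next_lyap[OF sP L, of K']] unfolding E_def a_def by (simp add: qf_add qf_diff)
  moreover have "x \<bullet> ((transpose E ** R ** E) *v x) \<le> norm R * norm E ^ 2 * norm x ^ 2"
    by (rule qf_KRK_upper)
  moreover have "norm R * norm E ^ 2 * norm x ^ 2 < q * norm x ^ 2"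
    using E x unfolding E_def by (intro mult_strict_right_mono) simp_all
  ultimately show "x \<bullet> ((transpose (AK K') ** P + P ** AK K') *v x) < 0"
    using Qq[of x] KRK_psd[of x K'] KRK_psd[of x a] by linarith
qed

lemma decrease:
  assumes sP: "symmetric_mat P" and L: "lyap (AK K) P (Q + transpose K ** R ** K)"
    and h': "hurwitz (AK K')" and sP': "symmetric_mat P'" and L': "lyap (AK K') P' (Q + transpose K' ** R ** K')"
  shows "rho * norm (K - Ri ** transpose B ** P) ^ 2
     \<le> 2 * (trace (P - P') + norm R * norm (K' - Ri ** transpose B ** P) ^ 2 / q * trace P') * norm (AK K')"
    and "0 \<le> trace (P - P') + norm R * norm (K' - Ri ** transpose B ** P) ^ 2 / q * trace P'"
proof -
  define E where "E = K' - Ri ** transpose B ** P"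
  define a where "a = K - Ri ** transpose B ** P"
  define eta where "eta = norm R * norm E ^ 2 / q"
  have eta0: "0 \<le> eta" unfolding eta_def using q by simp
  define C where "C = (Q + transpose K' ** R ** K' - transpose E ** R ** E + transpose a ** R ** a)
      - (Q + transpose K' ** R ** K') + eta *\<^sub>R (Q + transpose K' ** R ** K')"
  have LZ: "lyap (AK K') ((P - P') + eta *\<^sub>R P') C"
    unfolding C_def E_def a_def by (intro lyap_add lyap_diff lyap_scale next_lyap[OF sP L] L')
  have Cx: "rho * norm (a *v x) ^ 2 \<le> x \<bullet> (C *v x)" for x
  proof -
    have "x \<bullet> ((transpose E ** R ** E) *v x) \<le> eta * (q * norm x ^ 2)"
      using qf_KRK_upper[of x E R] q unfolding eta_def by (simp add: field_simps)
    also have "\<dots> \<le> eta * (x \<bullet> (Q *v x))" by (intro mult_left_mono Qq eta0)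
    finally have 1: "x \<bullet> ((transpose E ** R ** E) *v x) \<le> eta * (x \<bullet> (Q *v x))" .
    have 2: "0 \<le> eta * (x \<bullet> ((transpose K' ** R ** K') *v x))" by (intro mult_nonneg_nonneg eta0 KRK_psd)
    have 3: "rho * norm (a *v x) ^ 2 \<le> x \<bullet> ((transpose a ** R ** a) *v x)"
      unfolding qf_KRK by (rule Rr)
    show ?thesis using 1 2 3 unfolding C_def by (simp add: qf_diff qf_add qf_scale algebra_simps)
  qed
  have pC: "psd C" unfolding psd_def
  proof
    fix x show "0 \<le> x \<bullet> (C *v x)" using Cx[of x] rho by (smt (verit) mult_nonneg_nonneg zero_le_power2)
  qed
  have sZ: "symmetric_mat ((P - P') + eta *\<^sub>R P')" by (intro sym_add sym_diff sym_scale sP sP')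
  have pZ: "psd ((P - P') + eta *\<^sub>R P')" using lyap_psd[OF h' LZ[unfolded lyap_def] pC] .
  have "trace C \<le> 2 * trace ((P - P') + eta *\<^sub>R P') * norm (AK K')"
    by (rule lyap_trace[OF sZ pZ LZ])
  moreover have "rho * norm a ^ 2 \<le> trace C"
  proof -
    have "rho * norm a ^ 2 = (\<Sum>j\<in>UNIV. rho * norm (a *v axis j 1) ^ 2)"
      by (simp add: sum_distrib_left[symmetric] norm_sq_cols)
    also have "\<dots> \<le> (\<Sum>j\<in>UNIV. axis j 1 \<bullet> (C *v axis j 1))" by (intro sum_mono Cx)
    also have "\<dots> = trace C" by (simp add: trace_qf)
    finally show ?thesis .
  qed
  ultimately show "rho * norm (K - Ri ** transpose B ** P) ^ 2
     \<le> 2 * (trace (P - P') + norm R * norm (K' - Ri ** transpose B ** P) ^ 2 / q * trace P') * norm (AK K')"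
    unfolding E_def[symmetric] a_def[symmetric] eta_def[symmetric]
    by (simp add: trace_add trace_scaleR)
  show "0 \<le> trace (P - P') + norm R * norm (K' - Ri ** transpose B ** P) ^ 2 / q * trace P'"
    using psd_trace[OF pZ] unfolding E_def[symmetric] eta_def[symmetric]
    by (simp add: trace_add trace_scaleR)
qed

end

lemma pd_lower:
  fixes M :: "real^'n^'n"
  assumes pd: "\<And>x. x \<noteq> 0 \<Longrightarrow> 0 < x \<bullet> (M *v x)"
  shows "\<exists>c>0. \<forall>x. c * norm x ^ 2 \<le> x \<bullet> (M *v x)"
proof -
  define f where "f x = x \<bullet> (M *v x)" for x :: "real^'n"
  have S: "compact (sphere (0::real^'n) 1)" by simp
  obtain x1 :: "real^'n" where "norm x1 = 1" using vector_choose_size[of 1] by auto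
  hence Sne: "sphere (0::real^'n) 1 \<noteq> {}" by auto
  have cont: "continuous_on (sphere 0 1) f" unfolding f_def
    by (intro continuous_on_inner continuous_on_id bounded_linear.continuous_on[OF matrix_vector_mul_bounded_linear])
  obtain x0 where x0: "x0 \<in> sphere 0 1" "\<And>y. y \<in> sphere 0 1 \<Longrightarrow> f x0 \<le> f y"
    using continuous_attains_inf[OF S Sne cont] by auto
  have "x0 \<noteq> 0" using x0(1) by auto
  hence c0: "0 < f x0" unfolding f_def by (rule pd)
  show ?thesis
  proof (intro exI conjI allI)
    show "0 < f x0" by (rule c0)
    fix x :: "real^'n"
    show "f x0 * norm x ^ 2 \<le> x \<bullet> (M *v x)"
    proof (cases "x = 0")
      case True thus ?thesis by simp
    next
      case False
      define y where "y = (1 / norm x) *\<^sub>R x"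
      have "y \<in> sphere 0 1" using False unfolding y_def by simp
      hence "f x0 \<le> f y" by (rule x0(2))
      also have "f y = f x / norm x ^ 2" unfolding y_def f_def
        by (simp add: matrix_vector_mult_scaleR power2_eq_square field_simps)
      finally show ?thesis using False unfolding f_def by (simp add: field_simps)
    qed
  qed
qed

lemma blk22_add: "blk22 (Gtil A B Q R P + dG) = R + blk22 dG"
  by (simp add: blk22_def Gtil_def Finite_Cartesian_Product.vec_eq_iff)

lemma blk21_add: "blk21 (Gtil A B Q R P + dG) = transpose B ** P + blk21 dG"
  by (simp add: blk21_def Gtil_def Finite_Cartesian_Product.vec_eq_iff)

lemma sum_Inr_le:
  fixes f :: "'a::finite + 'b::finite \<Rightarrow> real"
  assumes "\<And>i. 0 \<le> f i"
  shows "(\<Sum>b\<in>UNIV. f (Inr b)) \<le> (\<Sum>i\<in>UNIV. f i)"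
proof -
  have "(\<Sum>b\<in>UNIV. f (Inr b)) = (\<Sum>i\<in>range Inr. f i)"
    by (simp add: sum.reindex)
  also have "\<dots> \<le> (\<Sum>i\<in>UNIV. f i)" by (intro sum_mono2) (simp_all add: assms)
  finally show ?thesis .
qed

lemma sum_Inl_le:
  fixes f :: "'a::finite + 'b::finite \<Rightarrow> real"
  assumes "\<And>i. 0 \<le> f i"
  shows "(\<Sum>b\<in>UNIV. f (Inl b)) \<le> (\<Sum>i\<in>UNIV. f i)"
proof -
  have "(\<Sum>b\<in>UNIV. f (Inl b)) = (\<Sum>i\<in>range Inl. f i)"
    by (simp add: sum.reindex)
  also have "\<dots> \<le> (\<Sum>i\<in>UNIV. f i)" by (intro sum_mono2) (simp_all add: assms)
  finally show ?thesis .
qed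

lemma norm_blk22: "norm (blk22 (G::real^('n::finite+'m::finite)^('n+'m))) \<le> norm G"
proof -
  have "norm (blk22 G) ^ 2 = (\<Sum>a\<in>UNIV. \<Sum>b\<in>UNIV. (G $ Inr a $ Inr b)^2)"
    by (simp add: norm_sq_mat blk22_def)
  also have "\<dots> \<le> (\<Sum>a\<in>UNIV. \<Sum>j\<in>UNIV. (G $ Inr a $ j)^2)"
    by (intro sum_mono sum_Inr_le) simp
  also have "\<dots> \<le> (\<Sum>i\<in>UNIV. \<Sum>j\<in>UNIV. (G $ i $ j)^2)"
    by (intro sum_Inr_le[of "\<lambda>i. \<Sum>j\<in>UNIV. (G $ i $ j)^2"] sum_nonneg) simp
  also have "\<dots> = norm G ^ 2" by (simp add: norm_sq_mat)
  finally show ?thesis by (rule power2_le_imp_le) simp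
qed

lemma norm_blk21: "norm (blk21 (G::real^('n::finite+'m::finite)^('n+'m))) \<le> norm G"
proof -
  have "norm (blk21 G) ^ 2 = (\<Sum>a\<in>UNIV. \<Sum>b\<in>UNIV. (G $ Inr a $ Inl b)^2)"
    by (simp add: norm_sq_mat blk21_def)
  also have "\<dots> \<le> (\<Sum>a\<in>UNIV. \<Sum>j\<in>UNIV. (G $ Inr a $ j)^2)"
    by (intro sum_mono sum_Inl_le) simp
  also have "\<dots> \<le> (\<Sum>i\<in>UNIV. \<Sum>j\<in>UNIV. (G $ i $ j)^2)"
    by (intro sum_Inr_le[of "\<lambda>i. \<Sum>j\<in>UNIV. (G $ i $ j)^2"] sum_nonneg) simp
  also have "\<dots> = norm G ^ 2" by (simp add: norm_sq_mat)
  finally show ?thesis by (rule power2_le_imp_le) simp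
qed

lemma geo_bound:
  fixes v :: "nat \<Rightarrow> real"
  assumes rec: "\<And>i. i \<ge> N \<Longrightarrow> v (Suc i) \<le> a * v i + c" and a: "0 \<le> a" "a < 1" and c: "0 \<le> c"
  shows "v (N + k) \<le> a ^ k * v N + c / (1 - a)"
proof (induction k)
  case 0 thus ?case using a c by simp
next
  case (Suc k)
  have "v (N + Suc k) \<le> a * v (N + k) + c" using rec[of "N + k"] by simp
  also have "\<dots> \<le> a * (a ^ k * v N + c / (1 - a)) + c" by (intro add_right_mono mult_left_mono Suc a)
  also have "\<dots> = a ^ Suc k * v N + c / (1 - a)" using a by (simp add: field_simps)
  finally show ?case .
qed

lemma geo_lim:
  fixes v u :: "nat \<Rightarrow> real"
  assumes rec: "\<And>i. i \<ge> N \<Longrightarrow> v (Suc i) \<le> a * v i + u i" and a: "0 \<le> a" "a < 1"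
    and u: "u \<longlonglongrightarrow> 0" and v0: "\<And>i. i \<ge> N \<Longrightarrow> 0 \<le> v i"
  shows "v \<longlonglongrightarrow> 0"
proof (rule LIMSEQ_I)
  fix r :: real assume r: "0 < r"
  have "0 < r * (1 - a) / 2" using r a by simp
  from LIMSEQ_D[OF u this] obtain N0 where N0: "\<And>n. n \<ge> N0 \<Longrightarrow> norm (u n) < r * (1 - a) / 2" by auto
  define N1 where "N1 = max N N0"
  have rec1: "v (Suc i) \<le> a * v i + r * (1 - a) / 2" if "i \<ge> N1" for i
  proof -
    have "u i \<le> r * (1 - a) / 2" using N0[of i] that unfolding N1_def by auto
    thus ?thesis using rec[of i] that unfolding N1_def by auto
  qed
  have gb: "v (N1 + k) \<le> a ^ k * v N1 + r / 2" for k
  proof -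
    have e: "r * (1 - a) / 2 / (1 - a) = r / 2" using a by (simp add: field_simps)
    show ?thesis
      using geo_bound[where N=N1 and v=v and a=a and c="r * (1 - a) / 2" and k=k, OF rec1 a] r a
      unfolding e by simp
  qed
  have "(\<lambda>k. a ^ k * v N1) \<longlonglongrightarrow> 0 * v N1"
    by (intro tendsto_mult LIMSEQ_power_zero tendsto_const) (use a in simp)
  hence "(\<lambda>k. a ^ k * v N1) \<longlonglongrightarrow> 0" by simp
  from LIMSEQ_D[OF this, of "r/2"] r obtain k0 where k0: "\<And>k. k \<ge> k0 \<Longrightarrow> norm (a ^ k * v N1) < r / 2" by auto
  show "\<exists>no. \<forall>n\<ge>no. norm (v n - 0) < r"
  proof (intro exI allI impI)
    fix n assume n: "n \<ge> N1 + k0"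
    define k where "k = n - N1"
    have nk: "n = N1 + k" "k \<ge> k0" using n unfolding k_def by auto
    have "v n \<le> a ^ k * v N1 + r / 2" unfolding nk by (rule gb)
    moreover have "a ^ k * v N1 < r / 2" using k0[OF nk(2)] by simp
    moreover have "0 \<le> v n" using v0[of n] n unfolding N1_def by auto
    ultimately show "norm (v n - 0) < r" by simp
  qed
qed

lemma rec_step:
  fixes V V' tP eta g kap :: real
  assumes V: "0 \<le> V" and tP: "0 \<le> tP" and eta: "0 \<le> eta" "eta \<le> g / 2"
    and g: "0 < g" "g \<le> 1/2" "g \<le> kap"
    and main: "kap * V \<le> V - V' + eta * (tP + V')"
  shows "V' \<le> (1 - g / 2) * V + 2 * eta * tP"
proof -
  have "g * V \<le> kap * V" using g V by (intro mult_right_mono) simp_all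
  hence m2: "V' * (1 - eta) \<le> (1 - g) * V + eta * tP" using main by (simp add: algebra_simps)
  have e1: "1 - eta > 0" using eta g by simp
  have "(1 - g) * V \<le> (1 - eta) * ((1 - g/2) * V)"
  proof -
    have "eta * (1 - g/2) \<le> g / 2" using eta g by (smt (verit) mult_left_le mult_nonneg_nonneg)
    hence "(eta * (1 - g/2)) * V \<le> (g/2) * V" using V by (intro mult_right_mono) simp_all
    moreover have "(1 - eta) * ((1 - g/2) * V) = (1 - g) * V + ((g/2) * V - (eta * (1 - g/2)) * V)"
      by (simp add: algebra_simps divide_simps)
    ultimately show ?thesis by linarith
  qed
  moreover have "eta * tP \<le> (1 - eta) * (2 * eta * tP)"
  proof -
    have "1 \<le> 2 * (1 - eta)" using eta g by simp
    hence "1 * (eta * tP) \<le> (2 * (1 - eta)) * (eta * tP)"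
      using eta tP by (intro mult_right_mono) simp_all
    thus ?thesis by (simp add: algebra_simps)
  qed
  ultimately have "V' * (1 - eta) \<le> (1 - eta) * ((1 - g / 2) * V + 2 * eta * tP)"
    using m2 by (simp add: algebra_simps)
  thus ?thesis using e1 by (simp add: mult.commute)
qed

theorem corollary1:
  fixes A :: "real^'n^'n" and B :: "real^'m^'n" and Q :: "real^'n^'n" and R :: "real^'m^'m"
    and Pstar :: "real^'n^'n" and K1 :: "real^'n^'m"
  assumes ctrb: "controllable A B"
    and Q: "pos_def Q" and R: "pos_def R"
    and Pstar: "pos_def Pstar"
    and ARE: "transpose A ** Pstar + Pstar ** A
                - Pstar ** B ** matrix_inv R ** transpose B ** Pstar + Q = 0"
    and K1: "hurwitz (A - B ** K1)"
  shows "\<forall>\<epsilon>>0. \<exists>\<delta>2>0. \<exists>M0>0.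
    \<forall>(dG :: nat \<Rightarrow> real^('n + 'm)^('n + 'm)) (K :: nat \<Rightarrow> real^'n^'m) (Pt :: nat \<Rightarrow> real^'n^'n).
      (\<forall>i\<ge>1. symmetric_mat (dG i))
      \<and> (SUP i\<in>{1..}. ereal (frob (dG i))) < ereal \<delta>2
      \<and> K 1 = K1
      \<and> (\<forall>i\<ge>1. hurwitz (A - B ** K i) \<longrightarrow>
            symmetric_mat (Pt i) \<and>
            transpose (A - B ** K i) ** Pt i + Pt i ** (A - B ** K i)
              + Q + transpose (K i) ** R ** K i = 0)
      \<and> (\<forall>i\<ge>1. hurwitz (A - B ** K i) \<and> invertible (blk22 (Gtil A B Q R (Pt i) + dG i)) \<longrightarrow>
            K (Suc i) = matrix_inv (blk22 (Gtil A B Q R (Pt i) + dG i))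
                          ** blk21 (Gtil A B Q R (Pt i) + dG i))
      \<longrightarrow>
      (\<forall>i\<ge>1. invertible (blk22 (Gtil A B Q R (Pt i) + dG i))
              \<and> hurwitz (A - B ** K i) \<and> frob (Pt i) < M0)
      \<and> limsup (\<lambda>i. ereal (frob (Pt i - Pstar))) < ereal \<epsilon>
      \<and> (((\<lambda>i. frob (dG i)) \<longlonglongrightarrow> 0) \<longrightarrow> ((\<lambda>i. frob (Pt i - Pstar)) \<longlonglongrightarrow> 0))"
proof -
  have sQ: "symmetric_mat Q" and sR: "symmetric_mat R" and sP: "symmetric_mat Pstar"
    using Q R Pstar unfolding pos_def_def by auto
  obtain q where q: "q > 0" and Qq: "\<And>x. q * norm x ^ 2 \<le> x \<bullet> (Q *v x)"
    using pd_lower[of Q] Q unfolding pos_def_def by blast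
  obtain rho where rho: "rho > 0" and Rr: "\<And>x. rho * norm x ^ 2 \<le> x \<bullet> (R *v x)"
    using pd_lower[of R] R unfolding pos_def_def by blast
  have Ppd: "\<And>x. x \<noteq> 0 \<Longrightarrow> 0 < x \<bullet> (Pstar *v x)" using Pstar unfolding pos_def_def by blast
  have Rinv: "invertible R"
  proof -
    have "\<forall>x. R *v x = 0 \<longrightarrow> x = 0" using R unfolding pos_def_def
      by (metis inner_zero_right less_irrefl)
    thus ?thesis using matrix_left_invertible_ker invertible_left_inverse by blast
  qed
  interpret L: lqr2 A B Q R Pstar q rho
    by (intro lqr2.intro lqr.intro lqr2_axioms.intro) (use sQ sR sP Rinv ARE q Qq rho Rr Ppd in auto)
  show ?thesis
  proof (intro allI impI)
    fix \<epsilon> :: real assume eps: "\<epsilon> > 0"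
    show "\<exists>\<delta>2>0. \<exists>M0>0.
    \<forall>(dG :: nat \<Rightarrow> real^('n + 'm)^('n + 'm)) (K :: nat \<Rightarrow> real^'n^'m) (Pt :: nat \<Rightarrow> real^'n^'n).
      (\<forall>i\<ge>1. symmetric_mat (dG i))
      \<and> (SUP i\<in>{1..}. ereal (frob (dG i))) < ereal \<delta>2
      \<and> K 1 = K1
      \<and> (\<forall>i\<ge>1. hurwitz (A - B ** K i) \<longrightarrow>
            symmetric_mat (Pt i) \<and>
            transpose (A - B ** K i) ** Pt i + Pt i ** (A - B ** K i)
              + Q + transpose (K i) ** R ** K i = 0)
      \<and> (\<forall>i\<ge>1. hurwitz (A - B ** K i) \<and> invertible (blk22 (Gtil A B Q R (Pt i) + dG i)) \<longrightarrow>
            K (Suc i) = matrix_inv (blk22 (Gtil A B Q R (Pt i) + dG i))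
                          ** blk21 (Gtil A B Q R (Pt i) + dG i))
      \<longrightarrow>
      (\<forall>i\<ge>1. invertible (blk22 (Gtil A B Q R (Pt i) + dG i))
              \<and> hurwitz (A - B ** K i) \<and> frob (Pt i) < M0)
      \<and> limsup (\<lambda>i. ereal (frob (Pt i - Pstar))) < ereal \<epsilon>
      \<and> (((\<lambda>i. frob (dG i)) \<longlonglongrightarrow> 0) \<longrightarrow> ((\<lambda>i. frob (Pt i - Pstar)) \<longlonglongrightarrow> 0))"
      (is "\<exists>\<delta>2>0. \<exists>M0>0. ?G \<delta>2 M0")
    proof (cases "\<exists>P1. symmetric_mat P1 \<and> lyap (L.AK K1) P1 (Q + transpose K1 ** R ** K1)")
      case False
      have G11: "?G 1 1"
      proof (intro allI impI, goal_cases)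
        case (1 dG K Pt)
        have kk: "K 1 = K1" using 1[THEN conjunct2, THEN conjunct2, THEN conjunct1] .
        have pp: "hurwitz (A - B ** K 1) \<longrightarrow> symmetric_mat (Pt 1) \<and>
            transpose (A - B ** K 1) ** Pt 1 + Pt 1 ** (A - B ** K 1) + Q + transpose (K 1) ** R ** K 1 = 0"
          using 1[THEN conjunct2, THEN conjunct2, THEN conjunct2, THEN conjunct1]
          by (rule allE[where x=1]) simp
        have "symmetric_mat (Pt 1) \<and> lyap (L.AK K1) (Pt 1) (Q + transpose K1 ** R ** K1)"
          using pp K1 unfolding kk lyap_def L.AK_def by (simp add: add.assoc)
        with False show ?case by blast
      qed
      show ?thesis
        apply (rule exI[of _ 1], rule conjI, simp)
        apply (rule exI[of _ 1], rule conjI, simp)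
        by (rule G11)
    next
      case True
      then obtain P1 where sP1: "symmetric_mat P1" and LP1: "lyap (L.AK K1) P1 (Q + transpose K1 ** R ** K1)"
        by blast
      have hK1: "hurwitz (L.AK K1)" using K1 unfolding L.AK_def .
      define V1 where "V1 = trace (P1 - Pstar)"
      have V1: "0 \<le> V1" unfolding V1_def by (rule psd_trace[OF L.cost_psd[OF hK1 sP1 LP1]])
      define W where "W = V1 + 1"
      have W: "W > 0" using V1 unfolding W_def by simp
      define tP where "tP = trace Pstar"
      have tP: "tP > 0"
      proof -
        have "tP = (\<Sum>j\<in>UNIV. axis j 1 \<bullet> (Pstar *v axis j 1))" unfolding tP_def by (rule trace_qf)
        also have "\<dots> > 0" by (intro sum_pos Ppd) (auto simp: axis_eq_0_iff)
        finally show ?thesis .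
      qed
      define nR where "nR = norm R"
      have nR: "nR > 0"
      proof -
        obtain k :: 'm where True by simp
        have "0 < axis k 1 \<bullet> (R *v axis k 1)" using R unfolding pos_def_def by (simp add: axis_eq_0_iff)
        hence "R \<noteq> 0" by auto
        thus ?thesis unfolding nR_def by simp
      qed
      define nRi where "nRi = norm L.Ri"
      define nB where "nB = norm B"
      have nRi: "0 \<le> nRi" and nB: "0 \<le> nB" unfolding nRi_def nB_def by simp_all
      define cP where "cP = norm Pstar + W"
      have cP: "0 < cP" using W unfolding cP_def by (simp add: add_nonneg_pos)
      define cK where "cK = nRi * nB * cP"
      have cK: "0 \<le> cK" using nRi nB cP unfolding cK_def by simp
      define F where "F = norm A + nB * (cK + 1) + 1"
      have F: "1 \<le> F" using nB cK unfolding F_def by simp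
      define kap where "kap = rho * q / (2 * nR * tP * F)"
      have kap: "0 < kap" using rho q nR tP F unfolding kap_def by simp
      define g where "g = min kap (1/2)"
      have g: "0 < g" "g \<le> 1/2" "g \<le> kap" using kap unfolding g_def by auto
      define eta0 where "eta0 = min (g/2) (min (g * W / (4 * tP)) (\<epsilon> * g / (8 * tP)))"
      have eta0: "0 < eta0" "eta0 \<le> g/2" "eta0 \<le> g * W / (4 * tP)" "eta0 \<le> \<epsilon> * g / (8 * tP)"
        using g W tP eps unfolding eta0_def by auto
      define cE where "cE = 2 * nRi * (1 + cK) + 1"
      have cE: "1 \<le> cE" using nRi cK unfolding cE_def by simp
      define d2 where "d2 = min (1 / (2 * (nRi + 1))) (min (rho / 2) (min (1 / cE) (sqrt (eta0 * q / nR) / cE)))"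
      have d2: "0 < d2" using nRi rho cE eta0 q nR unfolding d2_def by auto
      have d2le: "d2 \<le> 1 / (2 * (nRi + 1))" "d2 \<le> rho / 2" "d2 \<le> 1 / cE" "d2 \<le> sqrt (eta0 * q / nR) / cE"
        unfolding d2_def by (meson min.cobounded1 min.cobounded2 order_trans)+
      define M0 where "M0 = norm Pstar + W + 1"
      have M0: "0 < M0" using W unfolding M0_def by (simp add: add_nonneg_pos)
      have "?G d2 M0"
      proof (intro allI impI, goal_cases)
        case (1 dG K Pt)
        have HK1: "K 1 = K1" using 1[THEN conjunct2, THEN conjunct2, THEN conjunct1] .
        have Hs: "(SUP i\<in>{1..}. ereal (frob (dG i))) < ereal d2" using 1[THEN conjunct2, THEN conjunct1] .
        have HPt: "\<forall>i\<ge>1. hurwitz (A - B ** K i) \<longrightarrow> symmetric_mat (Pt i) \<and>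
            transpose (A - B ** K i) ** Pt i + Pt i ** (A - B ** K i) + Q + transpose (K i) ** R ** K i = 0"
          using 1[THEN conjunct2, THEN conjunct2, THEN conjunct2, THEN conjunct1] .
        have HK: "\<forall>i\<ge>1. hurwitz (A - B ** K i) \<and> invertible (blk22 (Gtil A B Q R (Pt i) + dG i)) \<longrightarrow>
            K (Suc i) = matrix_inv (blk22 (Gtil A B Q R (Pt i) + dG i)) ** blk21 (Gtil A B Q R (Pt i) + dG i)"
          using 1[THEN conjunct2, THEN conjunct2, THEN conjunct2, THEN conjunct2] .
        have dGb: "norm (dG i) < d2" if "i \<ge> 1" for i
        proof -
          have "ereal (frob (dG i)) \<le> (SUP i\<in>{1..}. ereal (frob (dG i)))" using that by (intro SUP_upper) simp
          also note Hs
          finally show ?thesis by (simp add: frob_norm)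
        qed
        have PtL: "symmetric_mat (Pt i) \<and> lyap (L.AK (K i)) (Pt i) (Q + transpose (K i) ** R ** K i)"
          if "i \<ge> 1" "hurwitz (L.AK (K i))" for i
          using HPt that unfolding lyap_def L.AK_def by (simp add: add.assoc)
        define V where "V i = trace (Pt i - Pstar)" for i
        define eta where "eta i = nR * norm (K (Suc i) - L.Ri ** transpose B ** Pt i) ^ 2 / q" for i
        have step: "hurwitz (L.AK (K (Suc i))) \<and> invertible (blk22 (Gtil A B Q R (Pt i) + dG i))
             \<and> V (Suc i) \<le> (1 - g/2) * V i + 2 * eta i * tP \<and> 0 \<le> eta i \<and> eta i \<le> eta0
             \<and> eta i \<le> nR * (cE * norm (dG i))^2 / q"
          if i1: "i \<ge> 1" and hi: "hurwitz (L.AK (K i))" and Vi: "V i \<le> W" for i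
        proof -
          from PtL[OF i1 hi] have sPi: "symmetric_mat (Pt i)"
            and Li: "lyap (L.AK (K i)) (Pt i) (Q + transpose (K i) ** R ** K i)" by auto
          have pD: "psd (Pt i - Pstar)" by (rule L.cost_psd[OF hi sPi Li])
          have sD: "symmetric_mat (Pt i - Pstar)" by (rule L.sym_diff[OF sPi sP])
          have V0: "0 \<le> V i" unfolding V_def by (rule psd_trace[OF pD])
          have nP: "norm (Pt i) \<le> cP"
          proof -
            have "norm (Pt i) = norm (Pstar + (Pt i - Pstar))" by simp
            also have "\<dots> \<le> norm Pstar + norm (Pt i - Pstar)" by (rule norm_triangle_ineq)
            also have "\<dots> \<le> norm Pstar + V i" using psd_norm_trace[OF sD pD] unfolding V_def by simp
            finally show ?thesis using Vi unfolding cP_def by simp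
          qed
          define Kb where "Kb = L.Ri ** transpose B ** Pt i"
          have nKb: "norm Kb \<le> cK"
          proof -
            have "norm Kb \<le> norm (L.Ri ** transpose B) * norm (Pt i)" unfolding Kb_def by (rule norm_mm)
            also have "norm (L.Ri ** transpose B) \<le> nRi * nB"
              using norm_mm[of L.Ri "transpose B"] unfolding nRi_def nB_def norm_transpose .
            hence "norm (L.Ri ** transpose B) * norm (Pt i) \<le> (nRi * nB) * cP"
              using nP nRi nB by (intro mult_mono) simp_all
            finally show ?thesis unfolding cK_def .
          qed
          define D22 where "D22 = blk22 (dG i)"
          define D21 where "D21 = blk21 (dG i)"
          define \<delta> where "\<delta> = norm (dG i)"
          have \<delta>: "0 \<le> \<delta>" "\<delta> < d2" using dGb[OF i1] unfolding \<delta>_def by auto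
          have n22: "norm D22 \<le> \<delta>" unfolding D22_def \<delta>_def by (rule norm_blk22)
          have n21: "norm D21 \<le> \<delta>" unfolding D21_def \<delta>_def by (rule norm_blk21)
          define G where "G = Gtil A B Q R (Pt i) + dG i"
          have G22: "blk22 G = R + D22" unfolding G_def D22_def by (rule blk22_add)
          have G21: "blk21 G = transpose B ** Pt i + D21" unfolding G_def D21_def by (rule blk21_add)
          have inv: "invertible (blk22 G)"
          proof -
            have "\<forall>x. blk22 G *v x = 0 \<longrightarrow> x = 0"
            proof (intro allI impI)
              fix x assume x0: "blk22 G *v x = 0"
              have e: "x \<bullet> (blk22 G *v x) = x \<bullet> (R *v x) + x \<bullet> (D22 *v x)" unfolding G22 by (rule qf_add)
              have b1: "\<bar>x \<bullet> (D22 *v x)\<bar> \<le> norm D22 * norm x ^ 2" by (rule qf_bound)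
              have b2: "rho * norm x ^ 2 \<le> x \<bullet> (R *v x)" by (rule Rr)
              have "rho * norm x ^ 2 - norm D22 * norm x ^ 2 \<le> 0" using e b1 b2 x0 by (simp add: abs_le_iff)
              hence "(rho - norm D22) * norm x ^ 2 \<le> 0" by (simp add: left_diff_distrib)
              moreover have "rho - norm D22 > 0" using n22 \<delta> d2le rho by linarith
              ultimately have "norm x ^ 2 \<le> 0" by (simp add: mult_le_0_iff)
              thus "x = 0" by simp
            qed
            thus ?thesis using matrix_left_invertible_ker invertible_left_inverse by blast
          qed
          have hiA: "hurwitz (A - B ** K i)" using hi unfolding L.AK_def .
          define K' where "K' = K (Suc i)"
          have K'eq: "K' = matrix_inv (blk22 G) ** blk21 G"
            using HK i1 hiA inv unfolding G_def K'_def by blast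
          have GK: "blk22 G ** K' = blk21 G"
            unfolding K'eq by (simp add: matrix_mul_assoc inv_both[OF inv])
          define E where "E = K' - Kb"
          have RKb: "R ** Kb = transpose B ** Pt i" unfolding Kb_def by (simp add: matrix_mul_assoc[symmetric] L.RRi2)
          have RK': "R ** K' = transpose B ** Pt i + D21 - D22 ** K'"
          proof -
            have "R ** K' + D22 ** K' = transpose B ** Pt i + D21" using GK unfolding G22 G21 by (simp add: matrix_add_rdistrib)
            thus ?thesis by (simp add: eq_diff_eq)
          qed
          have RE: "R ** E = D21 - D22 ** K'" unfolding E_def by (simp add: matrix_sub_ldistrib RKb RK')
          have Eeq: "E = L.Ri ** (D21 - D22 ** K')"
          proof -
            have "E = L.Ri ** (R ** E)" by (simp add: L.RRi2)
            thus ?thesis unfolding RE .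
          qed
          have nK': "norm K' \<le> cK + norm E"
          proof -
            have "K' = Kb + E" unfolding E_def by simp
            hence "norm K' \<le> norm Kb + norm E" by (simp add: norm_triangle_ineq)
            thus ?thesis using nKb by simp
          qed
          have x: "nRi * \<delta> \<le> 1/2"
          proof -
            have "nRi * \<delta> \<le> nRi * (1 / (2 * (nRi + 1)))" using \<delta> d2le nRi by (intro mult_left_mono) simp_all
            also have "\<dots> \<le> 1/2" using nRi by (simp add: field_simps)
            finally show ?thesis .
          qed
          have nE: "norm E \<le> cE * \<delta>"
          proof -
            have "norm E \<le> nRi * norm (D21 - D22 ** K')" unfolding Eeq nRi_def by (rule norm_mm)
            also have "norm (D21 - D22 ** K') \<le> \<delta> + \<delta> * (cK + norm E)"
            proof -
              have "norm (D21 - D22 ** K') \<le> norm D21 + norm (D22 ** K')" by (rule norm_triangle_ineq4)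
              also have "norm (D22 ** K') \<le> norm D22 * norm K'" by (rule norm_mm)
              also have "norm D22 * norm K' \<le> \<delta> * (cK + norm E)" using n22 nK' \<delta> by (intro mult_mono) simp_all
              finally show ?thesis using n21 by simp
            qed
            hence "nRi * norm (D21 - D22 ** K') \<le> nRi * (\<delta> + \<delta> * (cK + norm E))" using nRi by (intro mult_left_mono)
            finally have e1: "norm E \<le> nRi * \<delta> * (1 + cK) + (nRi * \<delta>) * norm E" by (simp add: algebra_simps)
            have "(nRi * \<delta>) * norm E \<le> (1/2) * norm E" using x by (intro mult_right_mono) simp_all
            with e1 have "norm E \<le> 2 * (nRi * \<delta> * (1 + cK))" by linarith
            moreover have "cE * \<delta> = 2 * (nRi * \<delta> * (1 + cK)) + \<delta>" unfolding cE_def by (simp add: algebra_simps)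
            ultimately show ?thesis using \<delta> by linarith
          qed
          have cEd: "cE * \<delta> \<le> cE * d2" using \<delta> cE by (intro mult_left_mono) simp_all
          have eta_i: "eta i = nR * norm E ^ 2 / q" unfolding eta_def E_def K'_def Kb_def ..
          have eta_nn: "0 \<le> eta i" unfolding eta_i using nR q by simp
          have eta_b: "eta i \<le> nR * (cE * \<delta>)^2 / q"
          proof -
            have "norm E ^ 2 \<le> (cE * \<delta>)^2" using nE by (intro power_mono) simp_all
            thus ?thesis unfolding eta_i using nR q by (simp add: divide_right_mono)
          qed
          have eta_0: "nR * (cE * \<delta>)^2 / q \<le> eta0"
          proof -
            have "cE * d2 \<le> sqrt (eta0 * q / nR)"
              using d2le(4) cE by (simp add: field_simps)
            hence "cE * \<delta> \<le> sqrt (eta0 * q / nR)" using cEd by linarith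
            hence "(cE * \<delta>)^2 \<le> (sqrt (eta0 * q / nR))^2" using \<delta> cE by (intro power_mono) simp_all
            also have "\<dots> = eta0 * q / nR" using eta0 q nR by simp
            finally have "(cE * \<delta>)^2 \<le> eta0 * q / nR" .
            hence "nR * (cE * \<delta>)^2 \<le> nR * (eta0 * q / nR)" using nR by (intro mult_left_mono) simp_all
            also have "\<dots> = eta0 * q" using nR by simp
            finally show ?thesis using q by (simp add: divide_le_eq)
          qed
          have eta_le: "eta i \<le> eta0" using eta_b eta_0 by linarith
          have Eq: "norm R * norm (K' - L.Ri ** transpose B ** Pt i) ^ 2 < q"
          proof -
            have "eta i < 1" using eta_le eta0 g by linarith
            hence "nR * norm E ^ 2 / q < 1" unfolding eta_i .
            thus ?thesis using q unfolding nR_def E_def Kb_def by (simp add: divide_less_eq)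
          qed
          have h': "hurwitz (L.AK K')" by (rule L.next_hurwitz[OF sPi Li pD Eq])
          have i1': "Suc i \<ge> 1" by simp
          from PtL[OF i1' h'[unfolded K'_def]] have sP': "symmetric_mat (Pt (Suc i))"
            and L': "lyap (L.AK (K (Suc i))) (Pt (Suc i)) (Q + transpose (K (Suc i)) ** R ** K (Suc i))" by auto
          have dec: "rho * norm (K i - Kb) ^ 2
             \<le> 2 * (trace (Pt i - Pt (Suc i)) + eta i * trace (Pt (Suc i))) * norm (L.AK K')"
            and dec0: "0 \<le> trace (Pt i - Pt (Suc i)) + eta i * trace (Pt (Suc i))"
            using L.decrease[OF sPi Li h'[unfolded K'_def] sP' L'] unfolding eta_def Kb_def K'_def nR_def by auto
          have res: "q * V i \<le> nR * norm (K i - Kb) ^ 2 * tP"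
            using L.resid_bound[OF sPi Li] unfolding V_def nR_def Kb_def tP_def .
          have nAK: "norm (L.AK K') \<le> F"
          proof -
            have "norm (L.AK K') \<le> norm A + norm (B ** K')" unfolding L.AK_def by (rule norm_triangle_ineq4)
            also have "norm (B ** K') \<le> nB * norm K'" unfolding nB_def by (rule norm_mm)
            also have "nB * norm K' \<le> nB * (cK + 1)"
            proof -
              have "cE * d2 \<le> 1" using d2le(3) cE by (simp add: field_simps)
              hence "norm K' \<le> cK + 1" using nK' nE cEd by linarith
              thus ?thesis using nB by (intro mult_left_mono)
            qed
            finally show ?thesis unfolding F_def by simp
          qed
          define T where "T = V i - V (Suc i) + eta i * (tP + V (Suc i))"
          have T_eq: "trace (Pt i - Pt (Suc i)) + eta i * trace (Pt (Suc i)) = T"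
            unfolding T_def V_def tP_def by (simp add: trace_sub)
          have T0: "0 \<le> T" using dec0 T_eq by simp
          have kapV: "kap * V i \<le> T"
          proof -
            have "rho * (q * V i) \<le> rho * (nR * norm (K i - Kb) ^ 2 * tP)" using res rho by (intro mult_left_mono) auto
            also have "\<dots> = nR * tP * (rho * norm (K i - Kb) ^ 2)" by (simp add: algebra_simps)
            also have "\<dots> \<le> nR * tP * (2 * T * norm (L.AK K'))" using dec T_eq nR tP by (intro mult_left_mono) auto
            also have "\<dots> \<le> nR * tP * (2 * T * F)" using nAK T0 nR tP by (intro mult_left_mono) auto
            finally have "rho * q * V i \<le> (2 * nR * tP * F) * T" by (simp add: algebra_simps)
            thus ?thesis unfolding kap_def using nR tP F by (simp add: field_simps)
          qed
          have rec: "V (Suc i) \<le> (1 - g/2) * V i + 2 * eta i * tP"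
            by (rule rec_step[of "V i" tP "eta i" g kap "V (Suc i)"]) (use V0 tP eta_nn eta_le eta0 g kapV T_def in auto)
          show ?thesis using h' inv rec eta_nn eta_le eta_b unfolding K'_def G_def \<delta>_def by blast
        qed
        have inv: "hurwitz (L.AK (K i)) \<and> V i \<le> W" if "i \<ge> 1" for i
          using that
        proof (induction i rule: nat_induct_at_least)
          case base
          have h1: "hurwitz (L.AK (K 1))" using hK1 HK1 by simp
          from PtL[OF _ h1] have s1: "symmetric_mat (Pt 1)"
            and l1: "lyap (L.AK K1) (Pt 1) (Q + transpose K1 ** R ** K1)" using HK1 by auto
          have "lyap (L.AK K1) (P1 - Pt 1) ((Q + transpose K1 ** R ** K1) - (Q + transpose K1 ** R ** K1))"
            by (rule lyap_diff[OF LP1 l1])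
          hence "lyap (L.AK K1) (P1 - Pt 1) 0" by simp
          hence "psd (P1 - Pt 1)" using lyap_psd[OF hK1] unfolding lyap_def by (simp add: psd_def)
          hence "trace (Pt 1) \<le> trace P1" by (rule psd_trace_mono)
          hence "V 1 \<le> V1" unfolding V_def V1_def by (simp add: trace_sub)
          thus ?case using h1 unfolding W_def by simp
        next
          case (Suc i)
          have st: "hurwitz (L.AK (K (Suc i)))" "V (Suc i) \<le> (1 - g/2) * V i + 2 * eta i * tP" "eta i \<le> eta0"
            using step[OF Suc.hyps(1)] Suc.IH by auto
          have "(1 - g/2) * V i \<le> (1 - g/2) * W" using Suc.IH g by (intro mult_left_mono) auto
          moreover have "2 * eta i * tP \<le> 2 * eta0 * tP" using st(3) tP by simp
          moreover have "eta0 * tP \<le> g * W / 4" using eta0(3) tP by (simp add: field_simps)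
          ultimately have "V (Suc i) \<le> W" using st(2) by (simp add: algebra_simps)
          thus ?case using st(1) by simp
        qed
        have Vnn: "0 \<le> V i" and nPV: "norm (Pt i - Pstar) \<le> V i" if "i \<ge> 1" for i
        proof -
          have hi: "hurwitz (L.AK (K i))" using inv[OF that] by simp
          from PtL[OF that hi] have sPi: "symmetric_mat (Pt i)"
            and Li: "lyap (L.AK (K i)) (Pt i) (Q + transpose (K i) ** R ** K i)" by auto
          have pD: "psd (Pt i - Pstar)" by (rule L.cost_psd[OF hi sPi Li])
          show "0 \<le> V i" unfolding V_def by (rule psd_trace[OF pD])
          show "norm (Pt i - Pstar) \<le> V i" unfolding V_def by (rule psd_norm_trace[OF L.sym_diff[OF sPi sP] pD])
        qed
        have C1: "\<forall>i\<ge>1. invertible (blk22 (Gtil A B Q R (Pt i) + dG i)) \<and> hurwitz (A - B ** K i) \<and> frob (Pt i) < M0"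
        proof (intro allI impI conjI)
          fix i :: nat assume i: "i \<ge> 1"
          from inv[OF i] have hi: "hurwitz (L.AK (K i))" and Vi: "V i \<le> W" by auto
          show "invertible (blk22 (Gtil A B Q R (Pt i) + dG i))" using step[OF i hi Vi] by blast
          show "hurwitz (A - B ** K i)" using hi unfolding L.AK_def .
          have "norm (Pt i) = norm (Pstar + (Pt i - Pstar))" by simp
          also have "\<dots> \<le> norm Pstar + norm (Pt i - Pstar)" by (rule norm_triangle_ineq)
          also have "\<dots> \<le> norm Pstar + W" using nPV[OF i] Vi by simp
          finally show "frob (Pt i) < M0" unfolding frob_norm M0_def by simp
        qed
        define a where "a = 1 - g/2"
        have a: "0 \<le> a" "a < 1" using g unfolding a_def by auto
        have recV: "V (Suc i) \<le> a * V i + 2 * eta0 * tP" if "i \<ge> 1" for i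
        proof -
          from inv[OF that] have hi: "hurwitz (L.AK (K i))" and Vi: "V i \<le> W" by auto
          from step[OF that hi Vi] have "V (Suc i) \<le> (1 - g/2) * V i + 2 * eta i * tP" "eta i \<le> eta0" by auto
          thus ?thesis unfolding a_def using tP by (smt (verit) mult_right_mono)
        qed
        have gb: "V (1 + k) \<le> a ^ k * V 1 + 2 * eta0 * tP / (1 - a)" for k
          by (rule geo_bound[where N=1 and v=V and a=a and c="2 * eta0 * tP", OF recV a]) (use eta0 tP in simp_all)
        have c_le: "2 * eta0 * tP / (1 - a) \<le> \<epsilon> / 2"
        proof -
          have "2 * eta0 * tP / (1 - a) = 4 * (eta0 * tP) / g" unfolding a_def by (simp add: field_simps)
          also have "eta0 * tP \<le> \<epsilon> * g / 8" using eta0(4) tP by (simp add: field_simps)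
          hence "4 * (eta0 * tP) / g \<le> 4 * (\<epsilon> * g / 8) / g" using g by (intro divide_right_mono) simp_all
          also have "\<dots> = \<epsilon> / 2" using g by simp
          finally show ?thesis .
        qed
        have V1W: "V 1 \<le> W" using inv[of 1] by simp
        have "(\<lambda>k. a ^ k * W) \<longlonglongrightarrow> 0 * W"
          by (intro tendsto_mult LIMSEQ_power_zero tendsto_const) (use a in simp)
        hence "(\<lambda>k. a ^ k * W) \<longlonglongrightarrow> 0" by simp
        from LIMSEQ_D[OF this, of "\<epsilon>/4"] eps obtain k0 where k0: "\<And>k. k \<ge> k0 \<Longrightarrow> norm (a ^ k * W) < \<epsilon>/4" by auto
        have ev: "eventually (\<lambda>i. ereal (frob (Pt i - Pstar)) \<le> ereal (3 * \<epsilon> / 4)) sequentially"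
        proof (rule eventually_sequentiallyI[of "1 + k0"])
          fix i assume i: "i \<ge> 1 + k0"
          define k where "k = i - 1"
          have ik: "i = 1 + k" "k \<ge> k0" using i unfolding k_def by auto
          have "a ^ k * V 1 \<le> a ^ k * W" using V1W a by (intro mult_left_mono) simp_all
          moreover have "a ^ k * W < \<epsilon> / 4" using k0[OF ik(2)] by simp
          moreover have "V i \<le> a ^ k * V 1 + 2 * eta0 * tP / (1 - a)" unfolding ik by (rule gb)
          moreover have "norm (Pt i - Pstar) \<le> V i" using nPV[of i] ik by simp
          ultimately have "norm (Pt i - Pstar) \<le> 3 * \<epsilon> / 4" using c_le by linarith
          thus "ereal (frob (Pt i - Pstar)) \<le> ereal (3 * \<epsilon> / 4)" by (simp add: frob_norm)
        qed
        have "limsup (\<lambda>i. ereal (frob (Pt i - Pstar))) \<le> ereal (3 * \<epsilon> / 4)"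
          by (rule Limsup_bounded[OF ev])
        also have "ereal (3 * \<epsilon> / 4) < ereal \<epsilon>" using eps by simp
        finally have C2: "limsup (\<lambda>i. ereal (frob (Pt i - Pstar))) < ereal \<epsilon>" .
        have C3: "((\<lambda>i. frob (dG i)) \<longlonglongrightarrow> 0) \<longrightarrow> ((\<lambda>i. frob (Pt i - Pstar)) \<longlonglongrightarrow> 0)"
        proof
          assume lim: "(\<lambda>i. frob (dG i)) \<longlonglongrightarrow> 0"
          define u where "u i = 2 * tP * (nR * (cE * norm (dG i))^2 / q)" for i
          have "u \<longlonglongrightarrow> 2 * tP * (nR * (cE * 0)^2 / q)"
            unfolding u_def using lim q unfolding frob_norm by (intro tendsto_intros) auto
          hence u: "u \<longlonglongrightarrow> 0" by simp
          have recu: "V (Suc i) \<le> a * V i + u i" if "i \<ge> 1" for i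
          proof -
            from inv[OF that] have hi: "hurwitz (L.AK (K i))" and Vi: "V i \<le> W" by auto
            from step[OF that hi Vi] have s1: "V (Suc i) \<le> (1 - g/2) * V i + 2 * eta i * tP"
              and s2: "eta i \<le> nR * (cE * norm (dG i))^2 / q" by auto
            have "(2 * tP) * eta i \<le> (2 * tP) * (nR * (cE * norm (dG i))^2 / q)"
              using s2 tP by (intro mult_left_mono) simp_all
            hence "2 * eta i * tP \<le> u i" unfolding u_def by (simp add: mult_ac)
            thus ?thesis using s1 unfolding a_def by linarith
          qed
          have "V \<longlonglongrightarrow> 0" by (rule geo_lim[OF recu a u Vnn])
          show "(\<lambda>i. frob (Pt i - Pstar)) \<longlonglongrightarrow> 0"
          proof (rule tendsto_sandwich[of "\<lambda>_. 0" _ _ V])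
            show "eventually (\<lambda>i. 0 \<le> frob (Pt i - Pstar)) sequentially" by (simp add: frob_norm)
            show "eventually (\<lambda>i. frob (Pt i - Pstar) \<le> V i) sequentially"
              using nPV by (intro eventually_sequentiallyI[of 1]) (simp add: frob_norm)
          qed (simp_all add: \<open>V \<longlonglongrightarrow> 0\<close>)
        qed
        show ?case using C1 C2 C3 by blast
      qed
      show ?thesis
        apply (rule exI[of _ d2], rule conjI, rule d2)
        apply (rule exI[of _ M0], rule conjI, rule M0)
        by (rule \<open>?G d2 M0\<close>)
    qed
  qed
qed

end
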